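(* Assume the setup of the context with $F$ formally real, and let $V_\lambda$ be a simple $H$-module of type $\lambda\in\Lambda$. Then: (a) there is a symmetric bilinear form $\langle\cdot,\cdot\rangle_\lambda:V_\lambda\times V_\lambda\to K$ which is $H$-invariant, i.e. $\langle h^\ast v,w\rangle_\lambda=\langle v,hw\rangle_\lambda$ for all $h\in H$, $v,w\in V_\lambda$, and positive definite in the sense that $\langle w,w\rangle_\lambda$ is always a sum of squares in $K$ which is $0$ only for $w=0$ (in particular it is nondegenerate); (b) for this form and every $w\in V_\lambda\setminus\{0\}$ one has $\nu(\langle w,w\rangle_\lambda)\in2\Gamma$; (c) $a_\lambda\in\Gamma$, and there exists a balanced matrix representation of type $\lambda$.
   Context: Setup: $\Gamma$ a totally ordered abelian group; $K$ a field with surjective valuation $\nu:K\to\Gamma\cup\{\infty\}$, valuation ring $\mathcal{O}$, maximal ideal $\mathfrak{m}$, residue field $F=\mathcal{O}/\mathfrak{m}$, assumed formally real ($-1$ not a sum of squares); $\nu$ of a matrix is the minimum over entries. $H$ is a finite-dimensional split semisimple $K$-algebra, symmetric with trace form $\tau$; $\Lambda$ indexes simple modules, $\chi_\lambda$ characters, Schur elements $c_\lambda$ defined by $\tau=\sum_\lambda c_\lambda^{-1}\chi_\lambda$. $\ast$ is a $K$-linear involutive antiautomorphism of $H$ and there is a $\ast$-symmetric basis, i.e. a basis $B$ with $B^\ast=B$ and $\tau(bc^\ast)=\delta_{bc}$. $a_\lambda:=-\tfrac12\nu(c_\lambda)$. An irreducible matrix representation $\rho$ of type $\lambda$ is balanced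 if $a_\lambda\in\Gamma$ and $\nu(\rho(b))\ge -a_\lambda$ for all $b$ in every $\ast$-symmetric basis. *)

theory Defs
  imports "Jordan_Normal_Form.Matrix"
begin

text \<open>We represent nu only on nonzero elements; nu 0 = infinity is the
  convention that zero is excluded wherever nu is applied.\<close>

definition is_valuation :: "('k::field \<Rightarrow> 'g::linordered_ab_group_add) \<Rightarrow> bool" where
  "is_valuation \<nu> \<longleftrightarrow>
     (\<forall>x y. x \<noteq> 0 \<longrightarrow> y \<noteq> 0 \<longrightarrow> \<nu> (x * y) = \<nu> x + \<nu> y) \<and>
     (\<forall>x y. x \<noteq> 0 \<longrightarrow> y \<noteq> 0 \<longrightarrow> x + y \<noteq> 0 \<longrightarrow> min (\<nu> x) (\<nu> y) \<le> \<nu> (x + y))"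

definition surjective_valuation :: "('k::field \<Rightarrow> 'g::linordered_ab_group_add) \<Rightarrow> bool" where
  "surjective_valuation \<nu> \<longleftrightarrow> is_valuation \<nu> \<and> (\<forall>g. \<exists>x. x \<noteq> 0 \<and> \<nu> x = g)"

definition val_ring :: "('k::field \<Rightarrow> 'g::linordered_ab_group_add) \<Rightarrow> 'k set" where
  "val_ring \<nu> = {x. x = 0 \<or> 0 \<le> \<nu> x}"

definition val_maxideal :: "('k::field \<Rightarrow> 'g::linordered_ab_group_add) \<Rightarrow> 'k set" where
  "val_maxideal \<nu> = {x. x = 0 \<or> 0 < \<nu> x}"

text \<open>The residue field O/m is formally real: -1 is not a sum of squares in O/m,
  i.e. there are no x_1..x_n in O with -1 - sum x_i^2 in m.\<close>
definition residue_formally_real :: "('k::field \<Rightarrow> 'g::linordered_ab_group_add) \<Rightarrow> bool" where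
  "residue_formally_real \<nu> \<longleftrightarrow>
     \<not> (\<exists>xs. set xs \<subseteq> val_ring \<nu> \<and>
             - 1 - sum_list (map (\<lambda>x. x ^ 2) xs) \<in> val_maxideal \<nu>)"

definition sum_of_squares :: "'k::field \<Rightarrow> bool" where
  "sum_of_squares a \<longleftrightarrow> (\<exists>xs. a = sum_list (map (\<lambda>x. x ^ 2) xs))"

definition in_two_Gamma :: "'g::linordered_ab_group_add \<Rightarrow> bool" where
  "in_two_Gamma g \<longleftrightarrow> (\<exists>h. g = h + h)"

definition fd_algebra :: "('k::field \<Rightarrow> 'h::ring_1 \<Rightarrow> 'h) \<Rightarrow> bool" where
  "fd_algebra sc \<longleftrightarrow> vector_space sc \<and>
     (\<forall>a x y. sc a (x * y) = sc a x * y \<and> sc a (x * y) = x * sc a y) \<and>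
     (\<exists>B. finite_dimensional_vector_space sc B)"

definition left_ideal :: "('k::field \<Rightarrow> 'h::ring_1 \<Rightarrow> 'h) \<Rightarrow> 'h set \<Rightarrow> bool" where
  "left_ideal sc L \<longleftrightarrow> 0 \<in> L \<and> (\<forall>x\<in>L. \<forall>y\<in>L. x + y \<in> L) \<and>
     (\<forall>a. \<forall>x\<in>L. sc a x \<in> L) \<and> (\<forall>h. \<forall>x\<in>L. h * x \<in> L)"

text \<open>Semisimple: the regular left module is semisimple, i.e. every left ideal
  (submodule of H as a left H-module) is a direct summand.\<close>
definition semisimple_alg :: "('k::field \<Rightarrow> 'h::ring_1 \<Rightarrow> 'h) \<Rightarrow> bool" where
  "semisimple_alg sc \<longleftrightarrow> (\<forall>L. left_ideal sc L \<longrightarrow>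
     (\<exists>L'. left_ideal sc L' \<and> L \<inter> L' = {0} \<and> (\<forall>h. \<exists>x\<in>L. \<exists>y\<in>L'. h = x + y)))"

section \<open>Matrix representations (= finite-dimensional modules with a chosen basis)\<close>

definition mat_trace :: "'a::comm_ring_1 mat \<Rightarrow> 'a" where
  "mat_trace A = (\<Sum>i<dim_row A. A $$ (i, i))"

definition matrix_rep :: "('k::field \<Rightarrow> 'h::ring_1 \<Rightarrow> 'h) \<Rightarrow> nat \<Rightarrow> ('h \<Rightarrow> 'k mat) \<Rightarrow> bool" where
  "matrix_rep sc n \<rho> \<longleftrightarrow>
     (\<forall>h. \<rho> h \<in> carrier_mat n n) \<and> \<rho> 1 = 1\<^sub>m n \<and>
     (\<forall>x y. \<rho> (x * y) = \<rho> x * \<rho> y) \<and> (\<forall>x y. \<rho> (x + y) = \<rho> x + \<rho> y) \<and>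
     (\<forall>a x. \<rho> (sc a x) = a \<cdot>\<^sub>m \<rho> x)"

definition subspace_vec :: "nat \<Rightarrow> 'k::field vec set \<Rightarrow> bool" where
  "subspace_vec n U \<longleftrightarrow> U \<subseteq> carrier_vec n \<and> 0\<^sub>v n \<in> U \<and>
     (\<forall>u\<in>U. \<forall>v\<in>U. u + v \<in> U) \<and> (\<forall>a. \<forall>u\<in>U. a \<cdot>\<^sub>v u \<in> U)"

text \<open>Irreducible matrix representation = simple module K^n.\<close>
definition irreducible_rep :: "('k::field \<Rightarrow> 'h::ring_1 \<Rightarrow> 'h) \<Rightarrow> nat \<Rightarrow> ('h \<Rightarrow> 'k mat) \<Rightarrow> bool" where
  "irreducible_rep sc n \<rho> \<longleftrightarrow> matrix_rep sc n \<rho> \<and> 0 < n \<and>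
     (\<forall>U. subspace_vec n U \<longrightarrow> (\<forall>h. \<forall>u\<in>U. \<rho> h *\<^sub>v u \<in> U) \<longrightarrow>
          U = {0\<^sub>v n} \<or> U = carrier_vec n)"

definition iso_rep :: "nat \<Rightarrow> ('h \<Rightarrow> 'k::field mat) \<Rightarrow> nat \<Rightarrow> ('h \<Rightarrow> 'k mat) \<Rightarrow> bool" where
  "iso_rep n \<rho> m \<sigma> \<longleftrightarrow> n = m \<and> (\<exists>P Q. P \<in> carrier_mat n n \<and> Q \<in> carrier_mat n n \<and>
     P * Q = 1\<^sub>m n \<and> Q * P = 1\<^sub>m n \<and> (\<forall>h. \<sigma> h = P * \<rho> h * Q))"

text \<open>Split: every simple module V has End_H(V) = K.\<close>
definition split_alg :: "('k::field \<Rightarrow> 'h::ring_1 \<Rightarrow> 'h) \<Rightarrow> bool" where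
  "split_alg sc \<longleftrightarrow> (\<forall>n \<rho>. irreducible_rep sc n \<rho> \<longrightarrow>
     (\<forall>M \<in> carrier_mat n n. (\<forall>h. M * \<rho> h = \<rho> h * M) \<longrightarrow> (\<exists>a. M = a \<cdot>\<^sub>m 1\<^sub>m n)))"

definition symmetric_trace_form :: "('k::field \<Rightarrow> 'h::ring_1 \<Rightarrow> 'h) \<Rightarrow> ('h \<Rightarrow> 'k) \<Rightarrow> bool" where
  "symmetric_trace_form sc \<tau> \<longleftrightarrow>
     (\<forall>x y. \<tau> (x + y) = \<tau> x + \<tau> y) \<and> (\<forall>a x. \<tau> (sc a x) = a * \<tau> x) \<and>
     (\<forall>x y. \<tau> (x * y) = \<tau> (y * x)) \<and>
     (\<forall>x. (\<forall>y. \<tau> (x * y) = 0) \<longrightarrow> x = 0)"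

definition lin_inv_antiaut :: "('k::field \<Rightarrow> 'h::ring_1 \<Rightarrow> 'h) \<Rightarrow> ('h \<Rightarrow> 'h) \<Rightarrow> bool" where
  "lin_inv_antiaut sc st \<longleftrightarrow>
     (\<forall>x y. st (x + y) = st x + st y) \<and> (\<forall>a x. st (sc a x) = sc a (st x)) \<and>
     (\<forall>x y. st (x * y) = st y * st x) \<and> (\<forall>x. st (st x) = x)"

definition star_sym_basis :: "('k::field \<Rightarrow> 'h::ring_1 \<Rightarrow> 'h) \<Rightarrow> ('h \<Rightarrow> 'k) \<Rightarrow> ('h \<Rightarrow> 'h) \<Rightarrow> 'h set \<Rightarrow> bool" where
  "star_sym_basis sc \<tau> st B \<longleftrightarrow>
     finite_dimensional_vector_space sc B \<and> st ` B = B \<and>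
     (\<forall>b\<in>B. \<forall>c\<in>B. \<tau> (b * st c) = (if b = c then 1 else 0))"

text \<open>Valuation of a matrix (minimum over entries, nu 0 = infinity) is \<ge> g.\<close>
definition mat_val_ge :: "('k::field \<Rightarrow> 'g::linordered_ab_group_add) \<Rightarrow> 'k mat \<Rightarrow> 'g \<Rightarrow> bool" where
  "mat_val_ge \<nu> A g \<longleftrightarrow> (\<forall>i<dim_row A. \<forall>j<dim_col A. A $$ (i, j) \<noteq> 0 \<longrightarrow> g \<le> \<nu> (A $$ (i, j)))"

text \<open>Balanced: a_lambda = -1/2 nu(c_lambda) lies in Gamma, i.e. nu(c_lambda) = 2g
  for some g in Gamma (then a_lambda = -g), and nu(rho(b)) \<ge> -a_lambda = g for all b
  in every *-symmetric basis.\<close>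
definition balanced_rep ::
  "('k::field \<Rightarrow> 'h::ring_1 \<Rightarrow> 'h) \<Rightarrow> ('h \<Rightarrow> 'k) \<Rightarrow> ('h \<Rightarrow> 'h) \<Rightarrow> ('k \<Rightarrow> 'g::linordered_ab_group_add)
     \<Rightarrow> 'k \<Rightarrow> ('h \<Rightarrow> 'k mat) \<Rightarrow> bool" where
  "balanced_rep sc \<tau> st \<nu> c \<rho> \<longleftrightarrow>
     (\<exists>g. \<nu> c = g + g \<and>
        (\<forall>B. star_sym_basis sc \<tau> st B \<longrightarrow> (\<forall>b\<in>B. mat_val_ge \<nu> (\<rho> b) g)))"

end

theory Submission
  imports Defs "Jordan_Normal_Form.Determinant"
begin


lemma grp_double_zero: "(x::'g::linordered_ab_group_add) + x = 0 \<Longrightarrow> x = 0"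
  by (metis add_neg_neg add_pos_pos less_irrefl linorder_neqE)

lemma grp_double_le: "(a::'g::linordered_ab_group_add) + a \<le> b + b \<Longrightarrow> a \<le> b"
  by (metis add_strict_mono linorder_not_le not_le_imp_less)

context
  fixes \<nu> :: "'k::field \<Rightarrow> 'g::linordered_ab_group_add"
  assumes isv: "is_valuation \<nu>"
begin

lemma v_mult: "x \<noteq> 0 \<Longrightarrow> y \<noteq> 0 \<Longrightarrow> \<nu> (x * y) = \<nu> x + \<nu> y"
  using isv unfolding is_valuation_def by blast

lemma v_add: "x \<noteq> 0 \<Longrightarrow> y \<noteq> 0 \<Longrightarrow> x + y \<noteq> 0 \<Longrightarrow> min (\<nu> x) (\<nu> y) \<le> \<nu> (x + y)"
  using isv unfolding is_valuation_def by blast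

lemma v_one: "\<nu> 1 = 0"
  using v_mult[of 1 1] by simp

lemma v_mone: "\<nu> (-1) = 0"
  using v_mult[of "-1" "-1"] v_one grp_double_zero by force

lemma v_uminus: "x \<noteq> 0 \<Longrightarrow> \<nu> (-x) = \<nu> x"
  using v_mult[of "-1" x] v_mone by simp

lemma v_sq: "x \<noteq> 0 \<Longrightarrow> \<nu> (x^2) = \<nu> x + \<nu> x"
  by (simp add: power2_eq_square v_mult)

lemma v_div: "x \<noteq> 0 \<Longrightarrow> y \<noteq> 0 \<Longrightarrow> \<nu> (x / y) = \<nu> x - \<nu> y"
proof -
  assume x: "x \<noteq> 0" and y: "y \<noteq> 0"
  have "\<nu> (x / y) + \<nu> y = \<nu> x" using v_mult[of "x/y" y] x y by simp
  thus ?thesis by (simp add: algebra_simps)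
qed

lemma ring_add: "x \<in> val_ring \<nu> \<Longrightarrow> y \<in> val_ring \<nu> \<Longrightarrow> x + y \<in> val_ring \<nu>"
proof -
  assume a: "x \<in> val_ring \<nu>" "y \<in> val_ring \<nu>"
  show ?thesis
  proof (cases "x = 0 \<or> y = 0 \<or> x + y = 0")
    case True then show ?thesis using a by (auto simp: val_ring_def)
  next
    case False
    then have "min (\<nu> x) (\<nu> y) \<le> \<nu> (x + y)" using v_add by blast
    then show ?thesis using a False unfolding val_ring_def by (auto simp: min_def split: if_splits)
  qed
qed

lemma ring_mult: "x \<in> val_ring \<nu> \<Longrightarrow> y \<in> val_ring \<nu> \<Longrightarrow> x * y \<in> val_ring \<nu>"
proof -
  assume a: "x \<in> val_ring \<nu>" "y \<in> val_ring \<nu>"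
  show ?thesis
  proof (cases "x = 0 \<or> y = 0")
    case True then show ?thesis using a by (auto simp: val_ring_def)
  next
    case False
    then show ?thesis using a v_mult[of x y] unfolding val_ring_def by auto
  qed
qed

lemma ring_one: "1 \<in> val_ring \<nu>"
  unfolding val_ring_def by (simp add: v_one)

lemma ring_sum_sq: "set ys \<subseteq> val_ring \<nu> \<Longrightarrow> sum_list (map (\<lambda>x. x^2) ys) \<in> val_ring \<nu>"
proof (induction ys)
  case Nil then show ?case by (simp add: val_ring_def)
next
  case (Cons a ys)
  then show ?case by (auto intro!: ring_add ring_mult simp: power2_eq_square)
qed

context
  assumes fr: "residue_formally_real \<nu>"
begin

lemma K1:
  assumes "set ys \<subseteq> val_ring \<nu>"
  shows "1 + sum_list (map (\<lambda>x. x^2) ys) \<noteq> 0 \<and> \<nu> (1 + sum_list (map (\<lambda>x. x^2) ys)) = 0"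
proof -
  define v where "v = 1 + sum_list (map (\<lambda>x. x^2) ys)"
  have vr: "v \<in> val_ring \<nu>" unfolding v_def by (intro ring_add ring_one ring_sum_sq assms)
  have nm: "v \<notin> val_maxideal \<nu>"
  proof
    assume "v \<in> val_maxideal \<nu>"
    hence "- 1 - sum_list (map (\<lambda>x. x ^ 2) ys) \<in> val_maxideal \<nu>"
    proof -
      have e: "- 1 - sum_list (map (\<lambda>x. x ^ 2) ys) = - v" unfolding v_def by simp
      show ?thesis using \<open>v \<in> val_maxideal \<nu>\<close> v_uminus[of v] unfolding e val_maxideal_def
        by (cases "v = 0") auto
    qed
    with fr assms show False unfolding residue_formally_real_def by blast
  qed
  from vr nm have "v \<noteq> 0 \<and> \<nu> v = 0" unfolding val_ring_def val_maxideal_def by auto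
  thus ?thesis unfolding v_def .
qed

lemma K2:
  assumes ex: "\<exists>x\<in>set xs. x \<noteq> 0"
  shows "\<exists>x0\<in>set xs. x0 \<noteq> 0 \<and> (\<forall>x\<in>set xs. x \<noteq> 0 \<longrightarrow> \<nu> x0 \<le> \<nu> x) \<and>
     sum_list (map (\<lambda>x. x^2) xs) \<noteq> 0 \<and> \<nu> (sum_list (map (\<lambda>x. x^2) xs)) = \<nu> x0 + \<nu> x0"
proof -
  define A where "A = {x\<in>set xs. x \<noteq> 0}"
  have fA: "finite (\<nu> ` A)" "\<nu> ` A \<noteq> {}" using ex unfolding A_def by auto
  obtain x0 where x0: "x0 \<in> A" "\<nu> x0 = Min (\<nu> ` A)" using Min_in[OF fA] by auto
  have x0min: "\<forall>x\<in>set xs. x \<noteq> 0 \<longrightarrow> \<nu> x0 \<le> \<nu> x" using x0 fA unfolding A_def by auto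
  have x0nz: "x0 \<noteq> 0" "x0 \<in> set xs" using x0 unfolding A_def by auto
  define ys where "ys = map (\<lambda>x. x / x0) xs"
  have 1: "1 \<in> set ys" unfolding ys_def using x0nz by force
  have ysr: "set ys \<subseteq> val_ring \<nu>"
  proof
    fix y assume "y \<in> set ys"
    then obtain x where x: "x \<in> set xs" "y = x / x0" unfolding ys_def by auto
    show "y \<in> val_ring \<nu>"
    proof (cases "x = 0")
      case True then show ?thesis using x by (simp add: val_ring_def)
    next
      case False
      then show ?thesis using x x0min x0nz v_div[of x x0] unfolding val_ring_def by auto
    qed
  qed
  have eq: "sum_list (map (\<lambda>x. x^2) xs) = x0^2 * sum_list (map (\<lambda>x. x^2) ys)"
    unfolding ys_def by (simp add: sum_list_const_mult[symmetric] o_def power_divide x0nz)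
  have eq2: "sum_list (map (\<lambda>x. x^2) ys) = 1 + sum_list (map (\<lambda>x. x^2) (remove1 1 ys))"
    using sum_list_map_remove1[OF 1, of "\<lambda>x. x^2"] by simp
  have r: "set (remove1 1 ys) \<subseteq> val_ring \<nu>" using ysr by (meson notin_set_remove1 subsetD subsetI)
  from K1[OF r] eq2 have nz: "sum_list (map (\<lambda>x. x^2) ys) \<noteq> 0" "\<nu> (sum_list (map (\<lambda>x. x^2) ys)) = 0"
    by auto
  have "\<nu> (sum_list (map (\<lambda>x. x^2) xs)) = \<nu> x0 + \<nu> x0"
    unfolding eq using v_mult[of "x0^2"] nz x0nz v_sq by simp
  moreover have "sum_list (map (\<lambda>x. x^2) xs) \<noteq> 0" unfolding eq using nz x0nz by simp
  ultimately show ?thesis using x0min x0nz by blast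
qed

lemma K3: "sum_list (map (\<lambda>x. x^2) (xs::'k list)) = 0 \<longleftrightarrow> (\<forall>x\<in>set xs. x = 0)"
proof
  assume h: "sum_list (map (\<lambda>x. x^2) xs) = 0"
  show "\<forall>x\<in>set xs. x = 0"
  proof (rule ccontr)
    assume "\<not> (\<forall>x\<in>set xs. x = 0)"
    then have "\<exists>x\<in>set xs. x \<noteq> 0" by blast
    from K2[OF this] h show False by blast
  qed
next
  assume "\<forall>x\<in>set xs. x = 0" thus "sum_list (map (\<lambda>x. x^2) xs) = 0"
    by (induction xs) auto
qed

lemma K4: "x \<in> set (xs::'k list) \<Longrightarrow> x \<noteq> 0 \<Longrightarrow> \<nu> (sum_list (map (\<lambda>x. x^2) xs)) \<le> \<nu> x + \<nu> x"
  using K2[of xs] by (metis add_mono)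

lemma K5: "sum_list (map (\<lambda>x. x^2) (xs::'k list)) \<noteq> 0 \<Longrightarrow> in_two_Gamma (\<nu> (sum_list (map (\<lambda>x. x^2) xs)))"
  using K2[of xs] K3 unfolding in_two_Gamma_def by blast

end
end

lemma sos_set: "finite A \<Longrightarrow> \<exists>xs. (\<Sum>a\<in>A. (g a)^2) = sum_list (map (\<lambda>x. x^2) xs) \<and> set xs = g ` A"
proof (induction A rule: finite_induct)
  case empty then show ?case by (intro exI[of _ "[]"]) simp
next
  case (insert a A)
  then obtain xs where "(\<Sum>a\<in>A. (g a)^2) = sum_list (map (\<lambda>x. x^2) xs) \<and> set xs = g ` A" by blast
  then show ?case using insert by (intro exI[of _ "g a # xs"]) simp
qed



definition lin :: "('k::field \<Rightarrow> 'h::ring_1 \<Rightarrow> 'h) \<Rightarrow> ('h \<Rightarrow> 'k) \<Rightarrow> bool" where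
  "lin sc \<phi> \<longleftrightarrow> (\<forall>x y. \<phi> (x + y) = \<phi> x + \<phi> y) \<and> (\<forall>a x. \<phi> (sc a x) = a * \<phi> x)"

locale salg =
  fixes sc :: "'k::field \<Rightarrow> 'h::ring_1 \<Rightarrow> 'h" and \<tau> :: "'h \<Rightarrow> 'k" and st :: "'h \<Rightarrow> 'h"
  assumes alg: "fd_algebra sc" and sym: "symmetric_trace_form sc \<tau>" and star: "lin_inv_antiaut sc st"
begin

lemma vs: "vector_space sc" using alg unfolding fd_algebra_def by blast
lemma sc_mult1: "sc a (x * y) = sc a x * y" using alg unfolding fd_algebra_def by blast
lemma sc_mult2: "sc a (x * y) = x * sc a y" using alg unfolding fd_algebra_def by blast
lemma tau_add: "\<tau> (x + y) = \<tau> x + \<tau> y" using sym unfolding symmetric_trace_form_def by blast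
lemma tau_sc: "\<tau> (sc a x) = a * \<tau> x" using sym unfolding symmetric_trace_form_def by blast
lemma tau_comm: "\<tau> (x * y) = \<tau> (y * x)" using sym unfolding symmetric_trace_form_def by blast
lemma st_add: "st (x + y) = st x + st y" using star unfolding lin_inv_antiaut_def by blast
lemma st_sc: "st (sc a x) = sc a (st x)" using star unfolding lin_inv_antiaut_def by blast
lemma st_mult: "st (x * y) = st y * st x" using star unfolding lin_inv_antiaut_def by blast
lemma st_st[simp]: "st (st x) = x" using star unfolding lin_inv_antiaut_def by blast

lemma lin_zero: "lin sc \<phi> \<Longrightarrow> \<phi> 0 = 0"
  unfolding lin_def by (metis add_cancel_right_right add_0)

lemma lin_sum: assumes l: "lin sc \<phi>" and f: "finite A" shows "\<phi> (\<Sum>v\<in>A. sc (u v) v) = (\<Sum>v\<in>A. u v * \<phi> v)"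
  using f
proof (induction A rule: finite_induct)
  case empty then show ?case using lin_zero[OF l] by simp
next
  case (insert a A)
  then show ?case using l unfolding lin_def by simp
qed

lemma lin_tau_right: "lin sc (\<lambda>x. \<tau> (x * z))"
  unfolding lin_def by (simp add: distrib_right tau_add sc_mult1[symmetric] tau_sc)

lemma lin_tau_left: "lin sc (\<lambda>x. \<tau> (z * x))"
  unfolding lin_def by (simp add: distrib_left tau_add sc_mult2[symmetric] tau_sc)

lemma lin_st: "lin sc \<phi> \<Longrightarrow> lin sc (\<lambda>x. \<phi> (st x))"
  unfolding lin_def by (simp add: st_add st_sc)

lemma lin_comp_right: "lin sc \<phi> \<Longrightarrow> lin sc (\<lambda>x. \<phi> (x * z))"
  unfolding lin_def by (simp add: distrib_right sc_mult1[symmetric])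

lemma lin_comp_left: "lin sc \<phi> \<Longrightarrow> lin sc (\<lambda>x. \<phi> (z * x))"
  unfolding lin_def by (simp add: distrib_left sc_mult2[symmetric])

lemma lin_tau: "lin sc \<tau>"
  unfolding lin_def by (simp add: tau_add tau_sc)

context
  fixes B assumes B: "star_sym_basis sc \<tau> st B"
begin

lemma fdvs: "finite_dimensional_vector_space sc B" using B unfolding star_sym_basis_def by blast
lemma finB: "finite B" using fdvs unfolding finite_dimensional_vector_space_def finite_dimensional_vector_space_axioms_def by blast
lemma stB: "st ` B = B" using B unfolding star_sym_basis_def by blast
lemma stB_mem: "b \<in> B \<Longrightarrow> st b \<in> B" using stB by blast
lemma dual: "b \<in> B \<Longrightarrow> c \<in> B \<Longrightarrow> \<tau> (b * st c) = (if b = c then 1 else 0)"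
  using B unfolding star_sym_basis_def by blast

lemma sum_st: "(\<Sum>b\<in>B. g (st b)) = (\<Sum>b\<in>B. g b)"
proof -
  have "inj_on st B" by (metis inj_onI st_st)
  from sum.reindex[OF this, of g] stB show ?thesis by simp
qed

lemma repr: "\<exists>u. x = (\<Sum>v\<in>B. sc (u v) v)"
proof -
  interpret finite_dimensional_vector_space sc B by (rule fdvs)
  have "x \<in> span B" using span_Basis by simp
  then show ?thesis using span_finite[OF finite_Basis] by auto
qed

lemma expand: assumes "lin sc \<phi>" shows "\<phi> x = (\<Sum>b\<in>B. \<tau> (x * st b) * \<phi> b)"
proof -
  obtain u where u: "x = (\<Sum>v\<in>B. sc (u v) v)" using repr by blast
  have coef: "\<tau> (x * st c) = u c" if c: "c \<in> B" for c
  proof -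
    have "\<tau> (x * st c) = (\<Sum>v\<in>B. u v * \<tau> (v * st c))"
      unfolding u by (rule lin_sum[OF lin_tau_right finB])
    also have "\<dots> = (\<Sum>v\<in>B. if v = c then u v else 0)"
      by (rule sum.cong) (auto simp: dual c)
    also have "\<dots> = u c" using c finB by simp
    finally show ?thesis .
  qed
  have "\<phi> x = (\<Sum>v\<in>B. u v * \<phi> v)" unfolding u by (rule lin_sum[OF assms finB])
  also have "\<dots> = (\<Sum>b\<in>B. \<tau> (x * st b) * \<phi> b)" by (rule sum.cong) (auto simp: coef)
  finally show ?thesis .
qed

lemma tau_st: "\<tau> (st x) = \<tau> x"
proof -
  have base: "\<tau> (st (b * c)) = \<tau> (b * c)" if "b \<in> B" "c \<in> B" for b c
  proof -
    define c' where "c' = st c"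
    have c': "c' \<in> B" "c = st c'" unfolding c'_def using that stB_mem by auto
    have "\<tau> (st (b * c)) = \<tau> (c' * st b)" unfolding c' by (simp add: st_mult)
    also have "\<dots> = (if c' = b then 1 else 0)" using dual c' that by simp
    also have "\<dots> = \<tau> (b * c)" unfolding c' using dual c' that by auto
    finally show ?thesis .
  qed
  have step: "\<tau> (st (y * c)) = \<tau> (y * c)" if "c \<in> B" for y c
  proof -
    have l1: "lin sc (\<lambda>x. \<tau> (st (x * c)))" using lin_comp_right[OF lin_st[OF lin_tau]] by simp
    have "\<tau> (st (y * c)) = (\<Sum>b\<in>B. \<tau> (y * st b) * \<tau> (st (b * c)))" by (rule expand[OF l1])
    also have "\<dots> = (\<Sum>b\<in>B. \<tau> (y * st b) * \<tau> (b * c))" by (rule sum.cong) (auto simp: base that)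
    also have "\<dots> = \<tau> (y * c)" by (rule expand[OF lin_tau_right, symmetric])
    finally show ?thesis .
  qed
  have l2: "lin sc (\<lambda>y. \<tau> (st (x * y)))" using lin_comp_left[OF lin_st[OF lin_tau]] by simp
  have "\<tau> (st x) = \<tau> (st (x * 1))" by simp
  also have "\<dots> = (\<Sum>b\<in>B. \<tau> (1 * st b) * \<tau> (st (x * b)))" by (rule expand[OF l2])
  also have "\<dots> = (\<Sum>b\<in>B. \<tau> (1 * st b) * \<tau> (x * b))" by (rule sum.cong) (auto simp: step)
  also have "\<dots> = \<tau> (x * 1)" by (rule expand[OF lin_tau_left, symmetric])
  finally show ?thesis by simp
qed

lemma C_gen:
  assumes "lin sc \<phi>" "lin sc \<psi>"
  shows "(\<Sum>b\<in>B. \<phi> (h * b) * \<psi> (st b)) = (\<Sum>b\<in>B. \<phi> b * \<psi> (st b * h))"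
proof -
  have "(\<Sum>b\<in>B. \<phi> (h * b) * \<psi> (st b)) = (\<Sum>b\<in>B. (\<Sum>c\<in>B. \<tau> (h * b * st c) * \<phi> c) * \<psi> (st b))"
  proof -
    have e: "\<And>b. \<phi> (h * b) = (\<Sum>c\<in>B. \<tau> (h * b * st c) * \<phi> c)" by (rule expand[OF assms(1)])
    show ?thesis by (simp only: e)
  qed
  also have "\<dots> = (\<Sum>b\<in>B. (\<Sum>c\<in>B. \<tau> (h * st b * st c) * \<phi> c) * \<psi> b)"
    using sum_st[of "\<lambda>b. (\<Sum>c\<in>B. \<tau> (h * b * st c) * \<phi> c) * \<psi> (st b)"] by simp
  also have "\<dots> = (\<Sum>c\<in>B. \<Sum>b\<in>B. \<tau> (h * st b * st c) * \<phi> c * \<psi> b)"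
    unfolding sum_distrib_right by (rule sum.swap)
  also have "\<dots> = (\<Sum>c\<in>B. \<Sum>b\<in>B. \<phi> c * (\<tau> (st c * h * st b) * \<psi> b))"
  proof (intro sum.cong refl)
    fix b c
    have e: "\<tau> (h * st b * st c) = \<tau> (st c * h * st b)"
      using tau_comm[of "h * st b" "st c"] by (simp add: mult.assoc)
    show "\<tau> (h * st b * st c) * \<phi> c * \<psi> b = \<phi> c * (\<tau> (st c * h * st b) * \<psi> b)"
      unfolding e by (simp only: ac_simps)
  qed
  also have "\<dots> = (\<Sum>b\<in>B. \<phi> b * \<psi> (st b * h))"
  proof -
    have e: "\<And>c. \<psi> (st c * h) = (\<Sum>b\<in>B. \<tau> (st c * h * st b) * \<psi> b)" by (rule expand[OF assms(2)])
    show ?thesis by (simp only: e sum_distrib_left)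
  qed
  finally show ?thesis .
qed

lemma D_gen:
  assumes "lin sc \<phi>" "lin sc \<psi>"
  shows "(\<Sum>b\<in>B. \<phi> (b * st h) * \<psi> b) = (\<Sum>b\<in>B. \<phi> b * \<psi> (b * h))"
proof -
  have "(\<Sum>b\<in>B. \<phi> (b * st h) * \<psi> b) = (\<Sum>b\<in>B. (\<Sum>c\<in>B. \<tau> (b * st h * st c) * \<phi> c) * \<psi> b)"
  proof -
    have e: "\<And>b. \<phi> (b * st h) = (\<Sum>c\<in>B. \<tau> (b * st h * st c) * \<phi> c)" by (rule expand[OF assms(1)])
    show ?thesis by (simp only: e)
  qed
  also have "\<dots> = (\<Sum>c\<in>B. \<Sum>b\<in>B. \<tau> (b * st h * st c) * \<phi> c * \<psi> b)"
    unfolding sum_distrib_right by (rule sum.swap)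
  also have "\<dots> = (\<Sum>c\<in>B. \<Sum>b\<in>B. \<phi> c * (\<tau> (c * h * st b) * \<psi> b))"
  proof (intro sum.cong refl)
    fix b c
    have e: "\<tau> (b * st h * st c) = \<tau> (c * h * st b)"
      using tau_st[of "c * h * st b"] by (simp add: st_mult mult.assoc)
    show "\<tau> (b * st h * st c) * \<phi> c * \<psi> b = \<phi> c * (\<tau> (c * h * st b) * \<psi> b)"
      unfolding e by (simp only: ac_simps)
  qed
  also have "\<dots> = (\<Sum>b\<in>B. \<phi> b * \<psi> (b * h))"
  proof -
    have e: "\<And>c. \<psi> (c * h) = (\<Sum>b\<in>B. \<tau> (c * h * st b) * \<psi> b)" by (rule expand[OF assms(2)])
    show ?thesis by (simp only: e sum_distrib_left)
  qed
  finally show ?thesis .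
qed

end
end


context
  fixes sc :: "'k::field \<Rightarrow> 'h::ring_1 \<Rightarrow> 'h" and n :: nat and \<rho> :: "'h \<Rightarrow> 'k mat"
  assumes rep: "matrix_rep sc n \<rho>"
begin

lemma rep_carrier[simp]: "\<rho> h \<in> carrier_mat n n" using rep unfolding matrix_rep_def by blast
lemma rep_dims[simp]: "dim_row (\<rho> h) = n" "dim_col (\<rho> h) = n" using carrier_matD[OF rep_carrier[of h]] by auto

lemma rep_mult: "\<rho> (x * y) = \<rho> x * \<rho> y" using rep unfolding matrix_rep_def by blast
lemma rep_add: "\<rho> (x + y) = \<rho> x + \<rho> y" using rep unfolding matrix_rep_def by blast
lemma rep_sc: "\<rho> (sc a x) = a \<cdot>\<^sub>m \<rho> x" using rep unfolding matrix_rep_def by blast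
lemma rep_one: "\<rho> 1 = 1\<^sub>m n" using rep unfolding matrix_rep_def by blast

lemma rep_add_entry: "i < n \<Longrightarrow> j < n \<Longrightarrow> \<rho> (x + y) $$ (i, j) = \<rho> x $$ (i, j) + \<rho> y $$ (i, j)"
  unfolding rep_add by simp
lemma rep_sc_entry: "i < n \<Longrightarrow> j < n \<Longrightarrow> \<rho> (sc a x) $$ (i, j) = a * \<rho> x $$ (i, j)"
  unfolding rep_sc by simp

lemma rep_mult_entry: "i < n \<Longrightarrow> j < n \<Longrightarrow>
  \<rho> (x * y) $$ (i, j) = (\<Sum>k<n. \<rho> x $$ (i, k) * \<rho> y $$ (k, j))"
  unfolding rep_mult by (simp add: scalar_prod_def atLeast0LessThan)

lemma rep_lin: "i < n \<Longrightarrow> j < n \<Longrightarrow> lin sc (\<lambda>x. \<rho> x $$ (i, j))"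
  unfolding lin_def rep_add rep_sc by simp

lemma rep_vec: "u \<in> carrier_vec n \<Longrightarrow> i < n \<Longrightarrow> (\<rho> x *\<^sub>v u) $ i = (\<Sum>k<n. \<rho> x $$ (i, k) * u $ k)"
  by (simp add: scalar_prod_def atLeast0LessThan)

lemma rep_lin_vec: assumes u: "u \<in> carrier_vec n" and i: "i < n" shows "lin sc (\<lambda>x. (\<rho> x *\<^sub>v u) $ i)"
  unfolding lin_def
proof (intro conjI allI)
  fix x y
  have "(\<rho> (x + y) *\<^sub>v u) $ i = (\<Sum>k<n. \<rho> (x + y) $$ (i, k) * u $ k)" by (rule rep_vec[OF u i])
  also have "\<dots> = (\<Sum>k<n. \<rho> x $$ (i, k) * u $ k + \<rho> y $$ (i, k) * u $ k)"
    by (rule sum.cong[OF refl]) (simp add: rep_add_entry i distrib_right)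
  also have "\<dots> = (\<rho> x *\<^sub>v u) $ i + (\<rho> y *\<^sub>v u) $ i" by (simp add: sum.distrib rep_vec[OF u i])
  finally show "(\<rho> (x + y) *\<^sub>v u) $ i = (\<rho> x *\<^sub>v u) $ i + (\<rho> y *\<^sub>v u) $ i" .
next
  fix a x
  have "(\<rho> (sc a x) *\<^sub>v u) $ i = (\<Sum>k<n. \<rho> (sc a x) $$ (i, k) * u $ k)" by (rule rep_vec[OF u i])
  also have "\<dots> = (\<Sum>k<n. a * (\<rho> x $$ (i, k) * u $ k))"
    by (rule sum.cong[OF refl]) (simp add: rep_sc_entry i)
  also have "\<dots> = a * (\<rho> x *\<^sub>v u) $ i" by (simp add: sum_distrib_left rep_vec[OF u i])
  finally show "(\<rho> (sc a x) *\<^sub>v u) $ i = a * (\<rho> x *\<^sub>v u) $ i" .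
qed

end

section \<open>Schur lemmas\<close>

lemma wide_kernel:
  fixes A :: "'a::field mat"
  assumes A: "A \<in> carrier_mat n m" and nm: "n < m"
  shows "\<exists>v\<in>carrier_vec m. v \<noteq> 0\<^sub>v m \<and> A *\<^sub>v v = 0\<^sub>v n"
proof -
  define A' where "A' = mat m m (\<lambda>(i,j). if i < n then A $$ (i,j) else 0)"
  have A'c: "A' \<in> carrier_mat m m" unfolding A'_def by simp
  have "det A' = 0"
  proof (rule ccontr)
    assume "det A' \<noteq> 0"
    from det_non_zero_imp_unit[OF A'c this, of "()"]
    obtain B where B: "B \<in> carrier_mat m m" "A' * B = 1\<^sub>m m"
      unfolding Units_def ring_mat_def by auto
    have r0: "row A' (m-1) = 0\<^sub>v m" by (rule eq_vecI) (use nm in \<open>auto simp: A'_def\<close>)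
    have "(A' * B) $$ (m-1, m-1) = row A' (m-1) \<bullet> col B (m-1)" using B(1) A'c nm by simp
    also have "\<dots> = 0" unfolding r0 using B(1) nm by (intro scalar_prod_left_zero) auto
    finally have "(A' * B) $$ (m-1, m-1) = 0" .
    moreover have "(A' * B) $$ (m-1, m-1) = 1" unfolding B(2) using nm by simp
    ultimately show False by simp
  qed
  then obtain v where v: "v \<in> carrier_vec m" "v \<noteq> 0\<^sub>v m" "A' *\<^sub>v v = 0\<^sub>v m"
    using det_0_iff_vec_prod_zero_field[OF A'c] by blast
  have "A *\<^sub>v v = 0\<^sub>v n"
  proof (rule eq_vecI)
    fix i assume i: "i < dim_vec (0\<^sub>v n :: 'a vec)"
    then have "(A' *\<^sub>v v) $ i = 0" using v nm by simp
    moreover have "(A' *\<^sub>v v) $ i = (A *\<^sub>v v) $ i"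
      using i A nm v(1) unfolding A'_def by (simp add: scalar_prod_def row_def)
    ultimately show "(A *\<^sub>v v) $ i = 0\<^sub>v n $ i" using i by simp
  qed (use A in simp)
  then show ?thesis using v by blast
qed

lemma schur_iso:
  fixes sc :: "'k::field \<Rightarrow> 'h::ring_1 \<Rightarrow> 'h"
  assumes i1: "irreducible_rep sc n1 \<rho>1" and i2: "irreducible_rep sc n2 \<rho>2"
    and M: "M \<in> carrier_mat n1 n2" and inter: "\<forall>h. \<rho>1 h * M = M * \<rho>2 h"
    and nz: "M \<noteq> 0\<^sub>m n1 n2"
  shows "iso_rep n1 \<rho>1 n2 \<rho>2"
proof -
  have r1: "matrix_rep sc n1 \<rho>1" and r2: "matrix_rep sc n2 \<rho>2" and p1: "0 < n1" and p2: "0 < n2"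
    using i1 i2 unfolding irreducible_rep_def by auto
  note c1 = rep_carrier[OF r1] and c2 = rep_carrier[OF r2]
  define K where "K = {v \<in> carrier_vec n2. M *\<^sub>v v = 0\<^sub>v n1}"
  have Ksub: "subspace_vec n2 K"
    unfolding subspace_vec_def K_def
  proof (intro conjI ballI allI)
    show "0\<^sub>v n2 \<in> {v \<in> carrier_vec n2. M *\<^sub>v v = 0\<^sub>v n1}" using M by (auto intro!: eq_vecI)
  next
    fix u v assume "u \<in> {v \<in> carrier_vec n2. M *\<^sub>v v = 0\<^sub>v n1}" "v \<in> {v \<in> carrier_vec n2. M *\<^sub>v v = 0\<^sub>v n1}"
    then show "u + v \<in> {v \<in> carrier_vec n2. M *\<^sub>v v = 0\<^sub>v n1}"
      using M by (auto simp: mult_add_distrib_mat_vec[OF M])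
  next
    fix a u assume "u \<in> {v \<in> carrier_vec n2. M *\<^sub>v v = 0\<^sub>v n1}"
    then show "a \<cdot>\<^sub>v u \<in> {v \<in> carrier_vec n2. M *\<^sub>v v = 0\<^sub>v n1}"
      using M by (auto simp: mult_mat_vec[OF M])
  qed auto
  have Kinv: "\<forall>h. \<forall>u\<in>K. \<rho>2 h *\<^sub>v u \<in> K"
  proof (intro allI ballI)
    fix h u assume u: "u \<in> K"
    have uc: "u \<in> carrier_vec n2" using u unfolding K_def by simp
    have "M *\<^sub>v (\<rho>2 h *\<^sub>v u) = (M * \<rho>2 h) *\<^sub>v u" using assoc_mult_mat_vec[OF M c2[of h] uc] by simp
    also have "\<dots> = (\<rho>1 h * M) *\<^sub>v u" using inter by simp
    also have "\<dots> = \<rho>1 h *\<^sub>v (M *\<^sub>v u)" using assoc_mult_mat_vec[OF c1[of h] M uc] by simp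
    also have "\<dots> = 0\<^sub>v n1" using u c1[of h] unfolding K_def by (auto intro!: eq_vecI)
    finally show "\<rho>2 h *\<^sub>v u \<in> K" using u c2[of h] unfolding K_def by auto
  qed
  have "K \<noteq> carrier_vec n2"
  proof
    assume K: "K = carrier_vec n2"
    have "M = 0\<^sub>m n1 n2"
    proof (rule eq_matI)
      fix i j assume ij: "i < dim_row (0\<^sub>m n1 n2 :: 'k mat)" "j < dim_col (0\<^sub>m n1 n2 :: 'k mat)"
      have "unit_vec n2 j \<in> K" using K by simp
      then have "(M *\<^sub>v unit_vec n2 j) $ i = 0" using ij unfolding K_def by simp
      moreover have "(M *\<^sub>v unit_vec n2 j) $ i = M $$ (i, j)" using ij M by simp
      ultimately show "M $$ (i, j) = 0\<^sub>m n1 n2 $$ (i, j)" using ij by simp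
    qed (use M in auto)
    with nz show False by simp
  qed
  with i2 Ksub Kinv have K0: "K = {0\<^sub>v n2}" unfolding irreducible_rep_def by blast
  have Mz: "M *\<^sub>v 0\<^sub>v n2 = 0\<^sub>v n1" using M by (auto intro!: eq_vecI)
  define I where "I = (\<lambda>v. M *\<^sub>v v) ` carrier_vec n2"
  have Isub: "subspace_vec n1 I"
    unfolding subspace_vec_def I_def
  proof (intro conjI ballI allI)
    show "(\<lambda>v. M *\<^sub>v v) ` carrier_vec n2 \<subseteq> carrier_vec n1" using M by auto
    show "0\<^sub>v n1 \<in> (\<lambda>v. M *\<^sub>v v) ` carrier_vec n2"
      using Mz by (auto intro!: image_eqI[of _ _ "0\<^sub>v n2"])
  next
    fix u v assume "u \<in> (\<lambda>v. M *\<^sub>v v) ` carrier_vec n2" "v \<in> (\<lambda>v. M *\<^sub>v v) ` carrier_vec n2"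
    then obtain x y where "x \<in> carrier_vec n2" "y \<in> carrier_vec n2" "u = M *\<^sub>v x" "v = M *\<^sub>v y" by auto
    then show "u + v \<in> (\<lambda>v. M *\<^sub>v v) ` carrier_vec n2"
      by (intro image_eqI[of _ _ "x + y"]) (auto simp: mult_add_distrib_mat_vec[OF M])
  next
    fix a u assume "u \<in> (\<lambda>v. M *\<^sub>v v) ` carrier_vec n2"
    then obtain x where "x \<in> carrier_vec n2" "u = M *\<^sub>v x" by auto
    then show "a \<cdot>\<^sub>v u \<in> (\<lambda>v. M *\<^sub>v v) ` carrier_vec n2"
      by (intro image_eqI[of _ _ "a \<cdot>\<^sub>v x"]) (auto simp: mult_mat_vec[OF M])
  qed
  have Iinv: "\<forall>h. \<forall>u\<in>I. \<rho>1 h *\<^sub>v u \<in> I"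
  proof (intro allI ballI)
    fix h u assume "u \<in> I"
    then obtain x where x: "x \<in> carrier_vec n2" "u = M *\<^sub>v x" unfolding I_def by auto
    have "\<rho>1 h *\<^sub>v u = (\<rho>1 h * M) *\<^sub>v x" using x assoc_mult_mat_vec[OF c1[of h] M x(1)] by simp
    also have "\<dots> = (M * \<rho>2 h) *\<^sub>v x" using inter by simp
    also have "\<dots> = M *\<^sub>v (\<rho>2 h *\<^sub>v x)" using assoc_mult_mat_vec[OF M c2[of h] x(1)] by simp
    finally show "\<rho>1 h *\<^sub>v u \<in> I" unfolding I_def using x c2[of h] by auto
  qed
  have "I \<noteq> {0\<^sub>v n1}"
  proof
    assume I0: "I = {0\<^sub>v n1}"
    have "unit_vec n2 0 \<in> K" unfolding K_def using I0 unfolding I_def by auto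
    with K0 p2 have e: "unit_vec n2 0 = 0\<^sub>v n2" by simp
    have a: "unit_vec n2 0 $ 0 = (1::'k)" using p2 by simp
    have b: "(0\<^sub>v n2 :: 'k vec) $ 0 = 0" using p2 by simp
    from a b e show False by (metis zero_neq_one)
  qed
  with i1 Isub Iinv have Ifull: "I = carrier_vec n1" unfolding irreducible_rep_def by blast
  have le1: "\<not> n1 < n2"
  proof
    assume "n1 < n2"
    from wide_kernel[OF M this] obtain v where "v \<in> carrier_vec n2" "v \<noteq> 0\<^sub>v n2" "M *\<^sub>v v = 0\<^sub>v n1" by blast
    then have "v \<in> K" "v \<noteq> 0\<^sub>v n2" unfolding K_def by auto
    with K0 show False by simp
  qed
  have le2: "\<not> n2 < n1"
  proof
    assume "n2 < n1"
    have Mt: "transpose_mat M \<in> carrier_mat n2 n1" using M by simp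
    from wide_kernel[OF Mt \<open>n2 < n1\<close>] obtain y where y: "y \<in> carrier_vec n1" "y \<noteq> 0\<^sub>v n1"
      "transpose_mat M *\<^sub>v y = 0\<^sub>v n2" by blast
    have "y = 0\<^sub>v n1"
    proof (rule eq_vecI)
      fix i assume i: "i < dim_vec (0\<^sub>v n1 :: 'k vec)"
      then have "unit_vec n1 i \<in> I" using Ifull by simp
      then obtain x where x: "x \<in> carrier_vec n2" "unit_vec n1 i = M *\<^sub>v x" unfolding I_def by auto
      have "y $ i = y \<bullet> unit_vec n1 i" using i by simp
      also have "\<dots> = y \<bullet> (M *\<^sub>v x)" using x by simp
      also have "\<dots> = (transpose_mat M *\<^sub>v y) \<bullet> x" using transpose_vec_mult_scalar[OF M x(1) y(1)] by simp
      also have "\<dots> = 0" using y x by simp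
      finally show "y $ i = 0\<^sub>v n1 $ i" using i by simp
    qed (use y in simp)
    with y show False by simp
  qed
  have nn: "n1 = n2" using le1 le2 by simp
  have Mc: "M \<in> carrier_mat n1 n1" using M nn by simp
  have "det M \<noteq> 0"
  proof
    assume "det M = 0"
    then obtain v where "v \<in> carrier_vec n1" "v \<noteq> 0\<^sub>v n1" "M *\<^sub>v v = 0\<^sub>v n1"
      using det_0_iff_vec_prod_zero_field[OF Mc] by blast
    then have "v \<in> K" "v \<noteq> 0\<^sub>v n2" unfolding K_def using nn by auto
    with K0 show False by simp
  qed
  from det_non_zero_imp_unit[OF Mc this, of "()"]
  obtain N where N: "N \<in> carrier_mat n1 n1" "M * N = 1\<^sub>m n1" "N * M = 1\<^sub>m n1"
    unfolding Units_def ring_mat_def by auto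
  have "\<rho>2 h = N * \<rho>1 h * M" for h
  proof -
    have c2': "\<rho>2 h \<in> carrier_mat n1 n1" using c2 nn by simp
    have "N * \<rho>1 h * M = N * (\<rho>1 h * M)" using assoc_mult_mat[OF N(1) c1[of h] Mc] .
    also have "\<dots> = N * (M * \<rho>2 h)" using inter by simp
    also have "\<dots> = (N * M) * \<rho>2 h" using assoc_mult_mat[OF N(1) Mc c2'] by simp
    also have "\<dots> = \<rho>2 h" using N c2' by simp
    finally show ?thesis by simp
  qed
  then show ?thesis unfolding iso_rep_def using nn N Mc by blast
qed



context salg begin

definition Sm :: "'h set \<Rightarrow> ('h \<Rightarrow> 'k mat) \<Rightarrow> ('h \<Rightarrow> 'k mat) \<Rightarrow> nat \<Rightarrow> nat \<Rightarrow> nat \<Rightarrow> nat \<Rightarrow> 'k" where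
  "Sm B \<rho>1 \<rho>2 i j k l = (\<Sum>b\<in>B. \<rho>1 b $$ (i, j) * \<rho>2 (st b) $$ (k, l))"

lemma intertwine:
  assumes B: "star_sym_basis sc \<tau> st B" and r1: "matrix_rep sc n1 \<rho>1" and r2: "matrix_rep sc n2 \<rho>2"
    and j: "j < n1" and k: "k < n2"
  shows "\<rho>1 h * mat n1 n2 (\<lambda>(i,l). Sm B \<rho>1 \<rho>2 i j k l) = mat n1 n2 (\<lambda>(i,l). Sm B \<rho>1 \<rho>2 i j k l) * \<rho>2 h"
proof (rule eq_matI)
  fix i l assume "i < dim_row (mat n1 n2 (\<lambda>(i,l). Sm B \<rho>1 \<rho>2 i j k l) * \<rho>2 h)"
    "l < dim_col (mat n1 n2 (\<lambda>(i,l). Sm B \<rho>1 \<rho>2 i j k l) * \<rho>2 h)"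
  then have i: "i < n1" and l: "l < n2" using rep_dims[OF r2] by auto
  have "(\<rho>1 h * mat n1 n2 (\<lambda>(i,l). Sm B \<rho>1 \<rho>2 i j k l)) $$ (i, l)
      = (\<Sum>p<n1. \<rho>1 h $$ (i, p) * Sm B \<rho>1 \<rho>2 p j k l)"
    using i l rep_dims[OF r1] by (simp add: scalar_prod_def atLeast0LessThan)
  also have "\<dots> = (\<Sum>p<n1. \<Sum>b\<in>B. \<rho>1 h $$ (i, p) * (\<rho>1 b $$ (p, j) * \<rho>2 (st b) $$ (k, l)))"
    unfolding Sm_def by (simp add: sum_distrib_left)
  also have "\<dots> = (\<Sum>b\<in>B. \<Sum>p<n1. \<rho>1 h $$ (i, p) * (\<rho>1 b $$ (p, j) * \<rho>2 (st b) $$ (k, l)))"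
    by (rule sum.swap)
  also have "\<dots> = (\<Sum>b\<in>B. (\<Sum>p<n1. \<rho>1 h $$ (i, p) * \<rho>1 b $$ (p, j)) * \<rho>2 (st b) $$ (k, l))"
    by (simp add: sum_distrib_right mult.assoc)
  also have "\<dots> = (\<Sum>b\<in>B. \<rho>1 (h * b) $$ (i, j) * \<rho>2 (st b) $$ (k, l))"
    using rep_mult_entry[OF r1 i j] by simp
  also have "\<dots> = (\<Sum>b\<in>B. \<rho>1 b $$ (i, j) * \<rho>2 (st b * h) $$ (k, l))"
    by (rule C_gen[OF B rep_lin[OF r1 i j] rep_lin[OF r2 k l]])
  also have "\<dots> = (\<Sum>b\<in>B. \<rho>1 b $$ (i, j) * (\<Sum>q<n2. \<rho>2 (st b) $$ (k, q) * \<rho>2 h $$ (q, l)))"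
    using rep_mult_entry[OF r2 k l] by simp
  also have "\<dots> = (\<Sum>q<n2. \<Sum>b\<in>B. \<rho>1 b $$ (i, j) * (\<rho>2 (st b) $$ (k, q) * \<rho>2 h $$ (q, l)))"
    by (simp add: sum_distrib_left) (rule sum.swap)
  also have "\<dots> = (\<Sum>q<n2. Sm B \<rho>1 \<rho>2 i j k q * \<rho>2 h $$ (q, l))"
    unfolding Sm_def by (simp add: sum_distrib_right mult.assoc)
  also have "\<dots> = (mat n1 n2 (\<lambda>(i,l). Sm B \<rho>1 \<rho>2 i j k l) * \<rho>2 h) $$ (i, l)"
    using i l rep_dims[OF r2] by (simp add: scalar_prod_def atLeast0LessThan)
  finally show "(\<rho>1 h * mat n1 n2 (\<lambda>(i,l). Sm B \<rho>1 \<rho>2 i j k l)) $$ (i, l)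
      = (mat n1 n2 (\<lambda>(i,l). Sm B \<rho>1 \<rho>2 i j k l) * \<rho>2 h) $$ (i, l)" .
qed (use rep_dims[OF r1] rep_dims[OF r2] in auto)

lemma Sm_sym:
  assumes B: "star_sym_basis sc \<tau> st B"
  shows "Sm B \<rho> \<rho> i j k l = Sm B \<rho> \<rho> k l i j"
proof -
  have "Sm B \<rho> \<rho> k l i j = (\<Sum>b\<in>B. \<rho> (st b) $$ (k, l) * \<rho> (st (st b)) $$ (i, j))"
    unfolding Sm_def by (rule sum_st[OF B, symmetric])
  then show ?thesis unfolding Sm_def by (simp add: mult.commute)
qed

lemma Orth_diff:
  assumes B: "star_sym_basis sc \<tau> st B" and i1: "irreducible_rep sc n1 \<rho>1" and i2: "irreducible_rep sc n2 \<rho>2"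
    and ni: "\<not> iso_rep n1 \<rho>1 n2 \<rho>2"
    and idx: "i < n1" "j < n1" "k < n2" "l < n2"
  shows "Sm B \<rho>1 \<rho>2 i j k l = 0"
proof -
  have r1: "matrix_rep sc n1 \<rho>1" and r2: "matrix_rep sc n2 \<rho>2" using i1 i2 unfolding irreducible_rep_def by auto
  let ?M = "mat n1 n2 (\<lambda>(i,l). Sm B \<rho>1 \<rho>2 i j k l)"
  have "?M = 0\<^sub>m n1 n2"
  proof (rule ccontr)
    assume "?M \<noteq> 0\<^sub>m n1 n2"
    from schur_iso[OF i1 i2 _ _ this] intertwine[OF B r1 r2 idx(2,3)] have "iso_rep n1 \<rho>1 n2 \<rho>2" by auto
    with ni show False by simp
  qed
  then have "?M $$ (i, l) = 0" using idx by simp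
  then show ?thesis using idx by simp
qed

lemma Orth_same:
  assumes B: "star_sym_basis sc \<tau> st B" and spl: "split_alg sc" and irr: "irreducible_rep sc n \<rho>"
  shows "\<exists>\<sigma>. \<forall>i j k l. i < n \<longrightarrow> j < n \<longrightarrow> k < n \<longrightarrow> l < n \<longrightarrow>
           Sm B \<rho> \<rho> i j k l = (if i = l \<and> j = k then \<sigma> else 0)"
proof -
  have r: "matrix_rep sc n \<rho>" and n: "0 < n" using irr unfolding irreducible_rep_def by auto
  have ex: "\<exists>a. \<forall>i<n. \<forall>l<n. Sm B \<rho> \<rho> i j k l = (if i = l then a else 0)" if j: "j < n" and k: "k < n" for j k
  proof -
    let ?M = "mat n n (\<lambda>(i,l). Sm B \<rho> \<rho> i j k l)"
    have "?M \<in> carrier_mat n n" by simp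
    moreover have "\<forall>h. ?M * \<rho> h = \<rho> h * ?M" using intertwine[OF B r r j k] by simp
    ultimately obtain a where a: "?M = a \<cdot>\<^sub>m 1\<^sub>m n" using spl irr unfolding split_alg_def by blast
    have "Sm B \<rho> \<rho> i j k l = (if i = l then a else 0)" if "i < n" "l < n" for i l
    proof -
      have "?M $$ (i, l) = (a \<cdot>\<^sub>m 1\<^sub>m n) $$ (i, l)" using a by simp
      then show ?thesis using that by simp
    qed
    then show ?thesis by blast
  qed
  define s where "s j k = (SOME a. \<forall>i<n. \<forall>l<n. Sm B \<rho> \<rho> i j k l = (if i = l then a else 0))" for j k
  have sP: "Sm B \<rho> \<rho> i j k l = (if i = l then s j k else 0)" if "i < n" "j < n" "k < n" "l < n" for i j k l
    using someI_ex[OF ex[OF that(2,3)]] that unfolding s_def by blast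
  have diag: "s j j = s i i" if "i < n" "j < n" for i j
    using sP[of i j j i] sP[of j i i j] Sm_sym[OF B, of \<rho> i j j i] that by simp
  show ?thesis
  proof (intro exI allI impI)
    fix i j k l assume idx: "i < n" "j < n" "k < n" "l < n"
    show "Sm B \<rho> \<rho> i j k l = (if i = l \<and> j = k then s 0 0 else 0)"
    proof (cases "i = l")
      case True
      then show ?thesis using sP[OF idx] sP[of k l i j] Sm_sym[OF B, of \<rho> i j k l] idx diag[of 0 j] n
        by auto
    next
      case False
      then show ?thesis using sP[OF idx] by simp
    qed
  qed
qed

end


lemma trace_conj:
  fixes A P Q :: "'a::comm_ring_1 mat"
  assumes A: "A \<in> carrier_mat n n" and P: "P \<in> carrier_mat n n" and Q: "Q \<in> carrier_mat n n"
    and PQ: "P * Q = 1\<^sub>m n"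
  shows "(\<Sum>i<n. (Q * A * P) $$ (i, i)) = (\<Sum>i<n. A $$ (i, i))"
proof -
  have e: "(Q * A * P) $$ (i, i) = (\<Sum>p<n. Q $$ (i, p) * (\<Sum>q<n. A $$ (p, q) * P $$ (q, i)))" if "i < n" for i
    using that A P Q by (simp add: scalar_prod_def atLeast0LessThan)
  have pq: "(\<Sum>i<n. P $$ (q, i) * Q $$ (i, p)) = (if q = p then 1 else 0)" if "q < n" "p < n" for p q
  proof -
    have "(P * Q) $$ (q, p) = (\<Sum>i<n. P $$ (q, i) * Q $$ (i, p))"
      using that P Q by (simp add: scalar_prod_def atLeast0LessThan)
    then show ?thesis using PQ that by simp
  qed
  have "(\<Sum>i<n. (Q * A * P) $$ (i, i)) = (\<Sum>i<n. \<Sum>p<n. \<Sum>q<n. A $$ (p, q) * (P $$ (q, i) * Q $$ (i, p)))"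
    by (rule sum.cong[OF refl]) (simp add: e sum_distrib_left ac_simps)
  also have "\<dots> = (\<Sum>p<n. \<Sum>q<n. \<Sum>i<n. A $$ (p, q) * (P $$ (q, i) * Q $$ (i, p)))"
  proof -
    have "(\<Sum>i<n. \<Sum>p<n. \<Sum>q<n. A $$ (p, q) * (P $$ (q, i) * Q $$ (i, p)))
        = (\<Sum>p<n. \<Sum>i<n. \<Sum>q<n. A $$ (p, q) * (P $$ (q, i) * Q $$ (i, p)))" by (rule sum.swap)
    also have "\<dots> = (\<Sum>p<n. \<Sum>q<n. \<Sum>i<n. A $$ (p, q) * (P $$ (q, i) * Q $$ (i, p)))"
      by (rule sum.cong[OF refl], rule sum.swap)
    finally show ?thesis .
  qed
  also have "\<dots> = (\<Sum>p<n. \<Sum>q<n. A $$ (p, q) * (if q = p then 1 else 0))"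
    by (intro sum.cong refl) (simp add: sum_distrib_left[symmetric] pq)
  also have "\<dots> = (\<Sum>q<n. A $$ (q, q))"
    by (rule sum.cong[OF refl]) (simp add: if_distrib cong: if_cong)
  finally show ?thesis .
qed

lemma conj_rep:
  fixes sc :: "'k::field \<Rightarrow> 'h::ring_1 \<Rightarrow> 'h"
  assumes irr: "irreducible_rep sc n \<rho>" and P: "P \<in> carrier_mat n n" and Q: "Q \<in> carrier_mat n n"
    and PQ: "P * Q = 1\<^sub>m n" and QP: "Q * P = 1\<^sub>m n"
  shows "irreducible_rep sc n (\<lambda>h. Q * \<rho> h * P) \<and> iso_rep n \<rho> n (\<lambda>h. Q * \<rho> h * P)"
proof -
  have r: "matrix_rep sc n \<rho>" and n: "0 < n" using irr unfolding irreducible_rep_def by auto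
  note c = rep_carrier[OF r]
  have as: "\<And>A B C. A \<in> carrier_mat n n \<Longrightarrow> B \<in> carrier_mat n n \<Longrightarrow> C \<in> carrier_mat n n \<Longrightarrow> A * B * C = A * (B * C)"
    by (rule assoc_mult_mat)
  have cm: "\<And>A B. A \<in> carrier_mat n n \<Longrightarrow> B \<in> carrier_mat n n \<Longrightarrow> A * B \<in> carrier_mat n n"
    by (rule mult_carrier_mat)
  have PQX: "\<And>X. X \<in> carrier_mat n n \<Longrightarrow> P * (Q * X) = X"
    using as[OF P Q] PQ by simp
  have rep': "matrix_rep sc n (\<lambda>h. Q * \<rho> h * P)"
    unfolding matrix_rep_def
  proof (intro conjI allI)
    fix h show "Q * \<rho> h * P \<in> carrier_mat n n" using P Q c by (intro cm) auto
  next
    show "Q * \<rho> 1 * P = 1\<^sub>m n" unfolding rep_one[OF r] using QP Q right_mult_one_mat[OF Q] by simp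
  next
    fix x y
    have cx: "\<rho> x \<in> carrier_mat n n" and cy: "\<rho> y \<in> carrier_mat n n" using c by auto
    have e1: "P * (Q * \<rho> y * P) = \<rho> y * P"
      unfolding as[OF Q cy P] by (rule PQX[OF cm[OF cy P]])
    have "Q * \<rho> x * P * (Q * \<rho> y * P) = (Q * \<rho> x) * (P * (Q * \<rho> y * P))"
      by (rule as[OF cm[OF Q cx] P cm[OF cm[OF Q cy] P]])
    also have "\<dots> = (Q * \<rho> x) * (\<rho> y * P)" by (simp only: e1)
    also have "(Q * \<rho> x) * (\<rho> y * P) = Q * (\<rho> x * \<rho> y) * P"
      using as[OF Q cx cm[OF cy P]] as[OF cx cy P] as[OF Q cm[OF cx cy] P] by simp
    also have "\<dots> = Q * \<rho> (x * y) * P" by (simp only: rep_mult[OF r])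
    finally show "Q * \<rho> (x * y) * P = Q * \<rho> x * P * (Q * \<rho> y * P)" by simp
  next
    fix x y
    show "Q * \<rho> (x + y) * P = Q * \<rho> x * P + Q * \<rho> y * P"
      unfolding rep_add[OF r] mult_add_distrib_mat[OF Q c c]
      using add_mult_distrib_mat[OF cm[OF Q c] cm[OF Q c] P] .
  next
    fix a x
    show "Q * \<rho> (sc a x) * P = a \<cdot>\<^sub>m (Q * \<rho> x * P)"
      unfolding rep_sc[OF r] mult_smult_distrib[OF Q c]
      using mult_smult_assoc_mat[OF cm[OF Q c] P] .
  qed
  have irr': "irreducible_rep sc n (\<lambda>h. Q * \<rho> h * P)"
    unfolding irreducible_rep_def
  proof (intro conjI allI impI rep' n)
    fix U assume U: "subspace_vec n U" and inv: "\<forall>h. \<forall>u\<in>U. (Q * \<rho> h * P) *\<^sub>v u \<in> U"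
    have Uc: "U \<subseteq> carrier_vec n" using U unfolding subspace_vec_def by blast
    define U' where "U' = (\<lambda>v. P *\<^sub>v v) ` U"
    have Pz: "P *\<^sub>v 0\<^sub>v n = 0\<^sub>v n" using P by (auto intro!: eq_vecI)
    have Qz: "Q *\<^sub>v 0\<^sub>v n = 0\<^sub>v n" using Q by (auto intro!: eq_vecI)
    have QPv: "Q *\<^sub>v (P *\<^sub>v v) = v" if "v \<in> carrier_vec n" for v
      using assoc_mult_mat_vec[OF Q P that] QP that by simp
    have PQv: "P *\<^sub>v (Q *\<^sub>v v) = v" if "v \<in> carrier_vec n" for v
      using assoc_mult_mat_vec[OF P Q that] PQ that by simp
    have sub': "subspace_vec n U'"
      unfolding subspace_vec_def U'_def
    proof (intro conjI ballI allI)
      show "(\<lambda>v. P *\<^sub>v v) ` U \<subseteq> carrier_vec n" using P Uc by auto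
      have "0\<^sub>v n \<in> U" using U unfolding subspace_vec_def by blast
      then show "0\<^sub>v n \<in> (\<lambda>v. P *\<^sub>v v) ` U" using Pz by (metis image_eqI)
    next
      fix u v assume "u \<in> (\<lambda>v. P *\<^sub>v v) ` U" "v \<in> (\<lambda>v. P *\<^sub>v v) ` U"
      then obtain x y where xy: "x \<in> U" "y \<in> U" "u = P *\<^sub>v x" "v = P *\<^sub>v y" by auto
      then have "x + y \<in> U" using U unfolding subspace_vec_def by blast
      moreover have "P *\<^sub>v (x + y) = u + v" using xy Uc mult_add_distrib_mat_vec[OF P] by auto
      ultimately show "u + v \<in> (\<lambda>v. P *\<^sub>v v) ` U" by (metis image_eqI)
    next
      fix a u assume "u \<in> (\<lambda>v. P *\<^sub>v v) ` U"
      then obtain x where x: "x \<in> U" "u = P *\<^sub>v x" by auto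
      then have "a \<cdot>\<^sub>v x \<in> U" using U unfolding subspace_vec_def by blast
      moreover have "P *\<^sub>v (a \<cdot>\<^sub>v x) = a \<cdot>\<^sub>v u" using x Uc mult_mat_vec[OF P] by auto
      ultimately show "a \<cdot>\<^sub>v u \<in> (\<lambda>v. P *\<^sub>v v) ` U" by (metis image_eqI)
    qed
    have inv': "\<forall>h. \<forall>u\<in>U'. \<rho> h *\<^sub>v u \<in> U'"
    proof (intro allI ballI)
      fix h u assume "u \<in> U'"
      then obtain x where x: "x \<in> U" "u = P *\<^sub>v x" unfolding U'_def by auto
      have xc: "x \<in> carrier_vec n" using x Uc by auto
      have e1: "P * (Q * \<rho> h * P) = \<rho> h * P"
        unfolding as[OF Q c P] by (rule PQX[OF cm[OF c P]])
      have "P *\<^sub>v ((Q * \<rho> h * P) *\<^sub>v x) = (P * (Q * \<rho> h * P)) *\<^sub>v x"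
        using assoc_mult_mat_vec[OF P cm[OF cm[OF Q c] P] xc] by simp
      also have "\<dots> = (\<rho> h * P) *\<^sub>v x" by (simp only: e1)
      also have "(\<rho> h * P) *\<^sub>v x = \<rho> h *\<^sub>v u" using assoc_mult_mat_vec[OF c P xc] x by simp
      finally have eq: "P *\<^sub>v ((Q * \<rho> h * P) *\<^sub>v x) = \<rho> h *\<^sub>v u" .
      have "(Q * \<rho> h * P) *\<^sub>v x \<in> U" using inv x(1) by blast
      then show "\<rho> h *\<^sub>v u \<in> U'" unfolding U'_def using eq by (metis image_eqI)
    qed
    from irr sub' inv' have "U' = {0\<^sub>v n} \<or> U' = carrier_vec n" unfolding irreducible_rep_def by blast
    then show "U = {0\<^sub>v n} \<or> U = carrier_vec n"
    proof
      assume U0: "U' = {0\<^sub>v n}"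
      have "U \<subseteq> {0\<^sub>v n}"
      proof
        fix u assume u: "u \<in> U"
        then have "P *\<^sub>v u = 0\<^sub>v n" using U0 unfolding U'_def by blast
        then have "Q *\<^sub>v (P *\<^sub>v u) = 0\<^sub>v n" using Qz by simp
        then show "u \<in> {0\<^sub>v n}" using QPv u Uc by auto
      qed
      moreover have "0\<^sub>v n \<in> U" using U unfolding subspace_vec_def by blast
      ultimately show ?thesis by blast
    next
      assume Uf: "U' = carrier_vec n"
      have "carrier_vec n \<subseteq> U"
      proof
        fix x :: "'k vec" assume x: "x \<in> carrier_vec n"
        then have "P *\<^sub>v x \<in> U'" using Uf P by auto
        then obtain u where u: "u \<in> U" "P *\<^sub>v u = P *\<^sub>v x" unfolding U'_def by auto
        then have "Q *\<^sub>v (P *\<^sub>v u) = Q *\<^sub>v (P *\<^sub>v x)" by simp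
        moreover have "u \<in> carrier_vec n" using u Uc by auto
        ultimately have "u = x" using QPv[of u] QPv[of x] x by simp
        then show "x \<in> U" using u by simp
      qed
      then show ?thesis using Uc by blast
    qed
  qed
  have "iso_rep n \<rho> n (\<lambda>h. Q * \<rho> h * P)"
    unfolding iso_rep_def using P Q PQ QP by blast
  with irr' show ?thesis by blast
qed

lemma gram_schmidt:
  fixes f :: "'k::field vec \<Rightarrow> 'k vec \<Rightarrow> 'k"
  assumes symm: "\<And>u v. u \<in> carrier_vec n \<Longrightarrow> v \<in> carrier_vec n \<Longrightarrow> f u v = f v u"
    and rowexp: "\<And>u v. u \<in> carrier_vec n \<Longrightarrow> v \<in> carrier_vec n \<Longrightarrow> f u v = (\<Sum>p<n. u $ p * f (unit_vec n p) v)"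
    and aniso: "\<And>w. w \<in> carrier_vec n \<Longrightarrow> f w w = 0 \<Longrightarrow> w = 0\<^sub>v n"
  shows "\<exists>ws. length ws = n \<and> (\<forall>k<n. ws!k \<in> carrier_vec n \<and> ws!k $ k = 1 \<and> (\<forall>i<n. k < i \<longrightarrow> ws!k $ i = 0))
     \<and> (\<forall>k<n. \<forall>m<n. m \<noteq> k \<longrightarrow> f (ws!k) (ws!m) = 0)"
proof -
  have "k \<le> n \<Longrightarrow> \<exists>ws. length ws = k \<and> (\<forall>j<k. ws!j \<in> carrier_vec n \<and> ws!j $ j = 1 \<and> (\<forall>i<n. j < i \<longrightarrow> ws!j $ i = 0))
     \<and> (\<forall>j<k. \<forall>m<k. m \<noteq> j \<longrightarrow> f (ws!j) (ws!m) = 0)" for k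
  proof (induction k)
    case 0 show ?case by simp
  next
    case (Suc k)
    then have k: "k < n" by simp
    from Suc obtain ws where len: "length ws = k"
      and tri: "\<forall>j<k. ws!j \<in> carrier_vec n \<and> ws!j $ j = 1 \<and> (\<forall>i<n. j < i \<longrightarrow> ws!j $ i = 0)"
      and orth: "\<forall>j<k. \<forall>m<k. m \<noteq> j \<longrightarrow> f (ws!j) (ws!m) = 0" by auto
    have nz: "f (ws!j) (ws!j) \<noteq> 0" if j: "j < k" for j
    proof
      assume "f (ws!j) (ws!j) = 0"
      then have "ws!j = 0\<^sub>v n" using aniso tri j by blast
      then have "ws!j $ j = 0" using j k by simp
      with tri j show False by simp
    qed
    define cf where "cf j = f (unit_vec n k) (ws!j) / f (ws!j) (ws!j)" for j
    define w where "w = vec n (\<lambda>i. (if i = k then 1 else 0) - (\<Sum>j<k. cf j * ws!j $ i))"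
    have wc: "w \<in> carrier_vec n" unfolding w_def by simp
    have wk: "w $ k = 1"
    proof -
      have "(\<Sum>j<k. cf j * ws!j $ k) = 0" using tri k by (intro sum.neutral) auto
      then show ?thesis unfolding w_def using k by simp
    qed
    have wz: "\<forall>i<n. k < i \<longrightarrow> w $ i = 0"
    proof (intro allI impI)
      fix i assume i: "i < n" "k < i"
      have "(\<Sum>j<k. cf j * ws!j $ i) = 0" using tri i by (intro sum.neutral) auto
      then show "w $ i = 0" unfolding w_def using i by simp
    qed
    have worth: "f w (ws!m) = 0" if m: "m < k" for m
    proof -
      have mc: "ws!m \<in> carrier_vec n" using tri m by auto
      define F where "F p = f (unit_vec n p) (ws!m)" for p
      have "f w (ws!m) = (\<Sum>p<n. w $ p * F p)" unfolding F_def by (rule rowexp[OF wc mc])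
      also have "\<dots> = (\<Sum>p<n. (if p = k then F p else 0) - (\<Sum>j<k. cf j * (ws!j $ p * F p)))"
        by (rule sum.cong[OF refl]) (simp add: w_def left_diff_distrib sum_distrib_right mult.assoc)
      also have "\<dots> = F k - (\<Sum>p<n. \<Sum>j<k. cf j * (ws!j $ p * F p))"
        using k by (simp add: sum_subtractf)
      also have "(\<Sum>p<n. \<Sum>j<k. cf j * (ws!j $ p * F p)) = (\<Sum>j<k. cf j * (\<Sum>p<n. ws!j $ p * F p))"
        by (subst sum.swap) (simp add: sum_distrib_left)
      also have "\<dots> = (\<Sum>j<k. cf j * f (ws!j) (ws!m))"
      proof (rule sum.cong[OF refl])
        fix j assume "j \<in> {..<k}"
        then have jc: "ws!j \<in> carrier_vec n" using tri by auto
        show "cf j * (\<Sum>p<n. ws!j $ p * F p) = cf j * f (ws!j) (ws!m)"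
          unfolding F_def using rowexp[OF jc mc] by simp
      qed
      also have "\<dots> = (\<Sum>j<k. if j = m then cf m * f (ws!m) (ws!m) else 0)"
        by (rule sum.cong[OF refl]) (use orth m in auto)
      also have "\<dots> = cf m * f (ws!m) (ws!m)" using m by simp
      also have "\<dots> = F k" unfolding cf_def F_def using nz[OF m] by simp
      finally show ?thesis by simp
    qed
    define ws' where "ws' = ws @ [w]"
    have nth': "ws'!j = (if j < k then ws!j else w)" if "j < Suc k" for j
      unfolding ws'_def using len that by (simp add: nth_append)
    show ?case
    proof (intro exI conjI allI impI)
      show "length ws' = Suc k" unfolding ws'_def using len by simp
    next
      fix j assume j: "j < Suc k"
      show "ws'!j \<in> carrier_vec n" using nth'[OF j] tri wc by auto
      show "ws'!j $ j = 1"
      proof (cases "j < k")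
        case True thus ?thesis using nth'[OF j] tri by simp
      next
        case False hence "j = k" using j by simp
        thus ?thesis using nth'[OF j] False wk by simp
      qed
    next
      fix j i assume j: "j < Suc k" and i: "i < n" "j < i"
      show "ws'!j $ i = 0"
      proof (cases "j < k")
        case True thus ?thesis using nth'[OF j] tri i by simp
      next
        case False hence "j = k" using j by simp
        thus ?thesis using nth'[OF j] False wz i by simp
      qed
    next
      fix j m assume jm: "j < Suc k" "m < Suc k" "m \<noteq> j"
      show "f (ws'!j) (ws'!m) = 0"
      proof (cases "j < k")
        case True
        show ?thesis
        proof (cases "m < k")
          case True
          then show ?thesis using nth' jm \<open>j < k\<close> orth by auto
        next
          case False
          then have "ws'!m = w" using nth' jm by auto
          moreover have "f (ws!j) w = f w (ws!j)" by (rule symm) (use tri wc \<open>j < k\<close> in auto)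
          ultimately show ?thesis using nth' jm \<open>j < k\<close> worth by auto
        qed
      next
        case False
        then have "m < k" using jm by auto
        then show ?thesis using nth' jm False worth by auto
      qed
    qed
  qed
  from this[of n] show ?thesis by simp
qed



locale mainctx = salg sc \<tau> st for sc :: "'k::field \<Rightarrow> 'h::ring_1 \<Rightarrow> 'h" and \<tau> st +
  fixes \<nu> :: "'k \<Rightarrow> 'g::linordered_ab_group_add"
    and \<Lambda> :: "'l set" and d :: "'l \<Rightarrow> nat" and \<rho>s :: "'l \<Rightarrow> 'h \<Rightarrow> 'k mat"
    and c :: "'l \<Rightarrow> 'k" and l0 :: 'l
  assumes val: "surjective_valuation \<nu>"
    and freal: "residue_formally_real \<nu>"
    and spl: "split_alg sc"
    and ex_basis: "\<exists>B. star_sym_basis sc \<tau> st B"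
    and fin: "finite \<Lambda>"
    and irr: "\<forall>\<mu>\<in>\<Lambda>. irreducible_rep sc (d \<mu>) (\<rho>s \<mu>)"
    and noniso: "\<forall>\<mu>\<in>\<Lambda>. \<forall>\<mu>'\<in>\<Lambda>. iso_rep (d \<mu>) (\<rho>s \<mu>) (d \<mu>') (\<rho>s \<mu>') \<longrightarrow> \<mu> = \<mu>'"
    and schur_nz: "\<forall>\<mu>\<in>\<Lambda>. c \<mu> \<noteq> 0"
    and schur: "\<forall>h. \<tau> h = (\<Sum>\<mu>\<in>\<Lambda>. inverse (c \<mu>) * mat_trace (\<rho>s \<mu> h))"
    and lam: "l0 \<in> \<Lambda>"
begin

lemma isv: "is_valuation \<nu>" using val unfolding surjective_valuation_def by blast

lemma rep_mu: "\<mu> \<in> \<Lambda> \<Longrightarrow> matrix_rep sc (d \<mu>) (\<rho>s \<mu>)" using irr unfolding irreducible_rep_def by blast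
lemma dpos: "\<mu> \<in> \<Lambda> \<Longrightarrow> 0 < d \<mu>" using irr unfolding irreducible_rep_def by blast

lemma tau_formula: "\<tau> h = (\<Sum>\<mu>\<in>\<Lambda>. inverse (c \<mu>) * (\<Sum>p<d \<mu>. \<rho>s \<mu> h $$ (p, p)))"
  using schur unfolding mat_trace_def by (simp add: rep_dims[OF rep_mu] cong: sum.cong)

lemma Orth_rhos:
  assumes B: "star_sym_basis sc \<tau> st B" and l: "l \<in> \<Lambda>"
    and idx: "i < d l" "j < d l" "k < d l" "m < d l"
  shows "Sm B (\<rho>s l) (\<rho>s l) i j k m = (if i = m \<and> j = k then c l else 0)"
proof -
  have il: "irreducible_rep sc (d l) (\<rho>s l)" using irr l by blast
  have rl: "matrix_rep sc (d l) (\<rho>s l)" by (rule rep_mu[OF l])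
  obtain \<sigma> where \<sigma>: "\<forall>i j k m. i < d l \<longrightarrow> j < d l \<longrightarrow> k < d l \<longrightarrow> m < d l \<longrightarrow>
           Sm B (\<rho>s l) (\<rho>s l) i j k m = (if i = m \<and> j = k then \<sigma> else 0)"
    using Orth_same[OF B spl il] by blast
  have d0: "0 < d l" by (rule dpos[OF l])
  have "1 = \<rho>s l 1 $$ (0, 0)" using d0 by (simp add: rep_one[OF rl])
  also have "\<dots> = (\<Sum>b\<in>B. \<tau> (1 * st b) * \<rho>s l b $$ (0, 0))"
    by (rule expand[OF B rep_lin[OF rl d0 d0]])
  also have "\<dots> = (\<Sum>b\<in>B. (\<Sum>\<mu>\<in>\<Lambda>. inverse (c \<mu>) * (\<Sum>p<d \<mu>. \<rho>s \<mu> (st b) $$ (p, p))) * \<rho>s l b $$ (0, 0))"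
    by (simp add: tau_formula)
  also have "\<dots> = (\<Sum>b\<in>B. \<Sum>\<mu>\<in>\<Lambda>. \<Sum>p<d \<mu>. inverse (c \<mu>) * (\<rho>s l b $$ (0, 0) * \<rho>s \<mu> (st b) $$ (p, p)))"
    by (simp add: sum_distrib_right sum_distrib_left ac_simps)
  also have "\<dots> = (\<Sum>\<mu>\<in>\<Lambda>. \<Sum>b\<in>B. \<Sum>p<d \<mu>. inverse (c \<mu>) * (\<rho>s l b $$ (0, 0) * \<rho>s \<mu> (st b) $$ (p, p)))"
    by (rule sum.swap)
  also have "\<dots> = (\<Sum>\<mu>\<in>\<Lambda>. \<Sum>p<d \<mu>. \<Sum>b\<in>B. inverse (c \<mu>) * (\<rho>s l b $$ (0, 0) * \<rho>s \<mu> (st b) $$ (p, p)))"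
    by (rule sum.cong[OF refl], rule sum.swap)
  also have "\<dots> = (\<Sum>\<mu>\<in>\<Lambda>. inverse (c \<mu>) * (\<Sum>p<d \<mu>. Sm B (\<rho>s l) (\<rho>s \<mu>) 0 0 p p))"
    unfolding Sm_def by (simp add: sum_distrib_left)
  also have "\<dots> = (\<Sum>\<mu>\<in>\<Lambda>. if \<mu> = l then inverse (c l) * \<sigma> else 0)"
  proof (rule sum.cong[OF refl])
    fix \<mu> assume mu: "\<mu> \<in> \<Lambda>"
    show "inverse (c \<mu>) * (\<Sum>p<d \<mu>. Sm B (\<rho>s l) (\<rho>s \<mu>) 0 0 p p) = (if \<mu> = l then inverse (c l) * \<sigma> else 0)"
    proof (cases "\<mu> = l")
      case True
      have "(\<Sum>p<d l. Sm B (\<rho>s l) (\<rho>s l) 0 0 p p) = (\<Sum>p<d l. if p = 0 then \<sigma> else 0)"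
        by (rule sum.cong[OF refl]) (use \<sigma> d0 in auto)
      also have "\<dots> = \<sigma>" using d0 by simp
      finally show ?thesis using True by simp
    next
      case False
      have im: "irreducible_rep sc (d \<mu>) (\<rho>s \<mu>)" using irr mu by blast
      have ni: "\<not> iso_rep (d l) (\<rho>s l) (d \<mu>) (\<rho>s \<mu>)" using noniso l mu False by blast
      have "(\<Sum>p<d \<mu>. Sm B (\<rho>s l) (\<rho>s \<mu>) 0 0 p p) = 0"
        by (rule sum.neutral) (use Orth_diff[OF B il im ni] d0 in auto)
      then show ?thesis using False by simp
    qed
  qed
  also have "\<dots> = inverse (c l) * \<sigma>" using l fin by simp
  finally have "\<sigma> = c l" using schur_nz l by (simp add: field_simps)
  then show ?thesis using \<sigma> idx by simp
qed

end


context mainctx begin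

definition "n0 = d l0"
definition "r0 = \<rho>s l0"
definition "B0 = (SOME B. star_sym_basis sc \<tau> st B)"
definition ff :: "'k vec \<Rightarrow> 'k vec \<Rightarrow> 'k" where
  "ff u v = (\<Sum>b\<in>B0. \<Sum>i<n0. (r0 b *\<^sub>v u) $ i * (r0 b *\<^sub>v v) $ i)"

lemma B0: "star_sym_basis sc \<tau> st B0" unfolding B0_def using ex_basis by (rule someI_ex)
lemma r0: "matrix_rep sc n0 r0" unfolding r0_def n0_def using rep_mu[OF lam] .
lemma i0: "irreducible_rep sc n0 r0" unfolding r0_def n0_def using irr lam by blast
lemma r0_dims[simp]: "dim_row (r0 h) = n0" "dim_col (r0 h) = n0" using rep_dims[OF r0] by auto
lemma r0_carrier[simp]: "r0 h \<in> carrier_mat n0 n0" using rep_carrier[OF r0] by auto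
lemma n0pos: "0 < n0" unfolding n0_def using dpos[OF lam] .

lemma ff_sym: "ff u v = ff v u" unfolding ff_def by (simp add: mult.commute)

lemma ff_add: assumes "u \<in> carrier_vec n0" "v \<in> carrier_vec n0" "w \<in> carrier_vec n0"
  shows "ff (u + v) w = ff u w + ff v w"
proof -
  have "(r0 b *\<^sub>v (u + v)) $ i = (r0 b *\<^sub>v u) $ i + (r0 b *\<^sub>v v) $ i" if "i < n0" for b i
    using mult_add_distrib_mat_vec[OF rep_carrier[OF r0] assms(1,2)] that by simp
  then show ?thesis unfolding ff_def by (simp add: distrib_right sum.distrib)
qed

lemma ff_smult: assumes "u \<in> carrier_vec n0" "w \<in> carrier_vec n0"
  shows "ff (a \<cdot>\<^sub>v u) w = a * ff u w"
proof -
  have "(r0 b *\<^sub>v (a \<cdot>\<^sub>v u)) $ i = a * (r0 b *\<^sub>v u) $ i" if "i < n0" for b i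
    using mult_mat_vec[OF rep_carrier[OF r0] assms(1)] that by simp
  then show ?thesis unfolding ff_def by (simp add: sum_distrib_left mult.assoc)
qed

lemma ff_inv: assumes v: "v \<in> carrier_vec n0" and w: "w \<in> carrier_vec n0"
  shows "ff (r0 (st h) *\<^sub>v v) w = ff v (r0 h *\<^sub>v w)"
proof -
  have e1: "r0 b *\<^sub>v (r0 (st h) *\<^sub>v v) = r0 (b * st h) *\<^sub>v v" for b
    unfolding rep_mult[OF r0] using assoc_mult_mat_vec[OF rep_carrier[OF r0] rep_carrier[OF r0] v] by simp
  have e2: "r0 b *\<^sub>v (r0 h *\<^sub>v w) = r0 (b * h) *\<^sub>v w" for b
    unfolding rep_mult[OF r0] using assoc_mult_mat_vec[OF rep_carrier[OF r0] rep_carrier[OF r0] w] by simp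
  have "ff (r0 (st h) *\<^sub>v v) w = (\<Sum>i<n0. \<Sum>b\<in>B0. (r0 (b * st h) *\<^sub>v v) $ i * (r0 b *\<^sub>v w) $ i)"
    unfolding ff_def e1 by (rule sum.swap)
  also have "\<dots> = (\<Sum>i<n0. \<Sum>b\<in>B0. (r0 b *\<^sub>v v) $ i * (r0 (b * h) *\<^sub>v w) $ i)"
    by (rule sum.cong[OF refl], rule D_gen[OF B0 rep_lin_vec[OF r0 v] rep_lin_vec[OF r0 w]]) simp_all
  also have "\<dots> = ff v (r0 h *\<^sub>v w)"
    unfolding ff_def e2 by (rule sum.swap)
  finally show ?thesis .
qed

lemma ff_sos: "\<exists>xs. ff w w = sum_list (map (\<lambda>x. x^2) xs) \<and>
    set xs = (\<lambda>(b, i). (r0 b *\<^sub>v w) $ i) ` (B0 \<times> {..<n0})"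
proof -
  have "ff w w = (\<Sum>x\<in>B0 \<times> {..<n0}. ((\<lambda>(b, i). (r0 b *\<^sub>v w) $ i) x)^2)"
    unfolding ff_def by (simp add: sum.cartesian_product power2_eq_square case_prod_beta del: index_mult_mat_vec)
  then show ?thesis using sos_set[of "B0 \<times> {..<n0}" "\<lambda>(b, i). (r0 b *\<^sub>v w) $ i"]
      finite_cartesian_product[OF finB[OF B0]] by auto
qed

lemma ff_sos': "sum_of_squares (ff w w)" using ff_sos unfolding sum_of_squares_def by blast

lemma ff_zero: assumes w: "w \<in> carrier_vec n0" shows "ff w w = 0 \<longleftrightarrow> w = 0\<^sub>v n0"
proof
  assume z: "ff w w = 0"
  obtain xs where xs: "ff w w = sum_list (map (\<lambda>x. x^2) xs)"
    "set xs = (\<lambda>(b, i). (r0 b *\<^sub>v w) $ i) ` (B0 \<times> {..<n0})" using ff_sos by blast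
  have all0: "(r0 b *\<^sub>v w) $ i = 0" if "b \<in> B0" "i < n0" for b i
  proof -
    have "\<forall>x\<in>set xs. x = 0" using K3[OF isv freal] z xs(1) by simp
    moreover have "(r0 b *\<^sub>v w) $ i \<in> set xs" using xs(2) that by force
    ultimately show ?thesis by blast
  qed
  show "w = 0\<^sub>v n0"
  proof (rule eq_vecI)
    fix i assume i: "i < dim_vec (0\<^sub>v n0 :: 'k vec)"
    then have i': "i < n0" by simp
    have "w $ i = (r0 1 *\<^sub>v w) $ i" using w unfolding rep_one[OF r0] by simp
    also have "\<dots> = (\<Sum>b\<in>B0. \<tau> (1 * st b) * (r0 b *\<^sub>v w) $ i)"
      by (rule expand[OF B0 rep_lin_vec[OF r0 w i']])
    also have "\<dots> = 0" using all0 i' by simp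
    finally show "w $ i = 0\<^sub>v n0 $ i" using i' by simp
  qed (use w in simp)
next
  assume "w = 0\<^sub>v n0"
  have "(r0 b *\<^sub>v 0\<^sub>v n0) $ i = 0" if "i < n0" for b i using that by (simp add: scalar_prod_def)
  then show "ff w w = 0" unfolding ff_def using \<open>w = 0\<^sub>v n0\<close> by simp
qed

lemma ff_two: assumes w: "w \<in> carrier_vec n0" "w \<noteq> 0\<^sub>v n0" shows "in_two_Gamma (\<nu> (ff w w))"
proof -
  obtain xs where xs: "ff w w = sum_list (map (\<lambda>x. x^2) xs)" using ff_sos by blast
  have "ff w w \<noteq> 0" using ff_zero[OF w(1)] w(2) by simp
  then show ?thesis using K5[OF isv freal] xs by simp
qed

lemma ff_rowexp: assumes u: "u \<in> carrier_vec n0" and v: "v \<in> carrier_vec n0"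
  shows "ff u v = (\<Sum>p<n0. u $ p * ff (unit_vec n0 p) v)"
proof -
  have ue: "(r0 b *\<^sub>v unit_vec n0 p) $ i = r0 b $$ (i, p)" if "i < n0" "p < n0" for b i p
    using that by simp
  have "ff u v = (\<Sum>b\<in>B0. \<Sum>i<n0. \<Sum>p<n0. u $ p * (r0 b $$ (i, p) * (r0 b *\<^sub>v v) $ i))"
    unfolding ff_def by (intro sum.cong refl) (simp add: rep_vec[OF r0 u] sum_distrib_right sum_distrib_left ac_simps del: index_mult_mat_vec)
  also have "\<dots> = (\<Sum>b\<in>B0. \<Sum>p<n0. \<Sum>i<n0. u $ p * (r0 b $$ (i, p) * (r0 b *\<^sub>v v) $ i))"
    by (rule sum.cong[OF refl], rule sum.swap)
  also have "\<dots> = (\<Sum>p<n0. \<Sum>b\<in>B0. \<Sum>i<n0. u $ p * (r0 b $$ (i, p) * (r0 b *\<^sub>v v) $ i))"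
    by (rule sum.swap)
  also have "\<dots> = (\<Sum>p<n0. u $ p * ff (unit_vec n0 p) v)"
    unfolding ff_def by (intro sum.cong refl) (simp add: ue sum_distrib_left)
  finally show ?thesis .
qed

end


context mainctx begin

lemma ofnat_nz: assumes "0 < m" shows "(of_nat m :: 'k) \<noteq> 0"
proof -
  have e: "(of_nat m :: 'k) = sum_list (map (\<lambda>x. x^2) (replicate m (1::'k)))"
    by (simp add: map_replicate sum_list_replicate)
  have "1 \<in> set (replicate m (1::'k))" using assms by simp
  then have "\<not> (\<forall>x\<in>set (replicate m (1::'k)). x = 0)" by (metis one_neq_zero)
  then show ?thesis unfolding e using K3[OF isv freal] by blast
qed

lemma Sm_trace:
  assumes "\<And>h. \<rho> h \<in> carrier_mat n0 n0"
  shows "(\<Sum>i<n0. \<Sum>k<n0. Sm B \<rho> \<rho> i i k k) = (\<Sum>b\<in>B. (\<Sum>i<n0. \<rho> b $$ (i, i)) * (\<Sum>k<n0. \<rho> (st b) $$ (k, k)))"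
proof -
  have "(\<Sum>i<n0. \<Sum>k<n0. Sm B \<rho> \<rho> i i k k) = (\<Sum>i<n0. \<Sum>k<n0. \<Sum>b\<in>B. \<rho> b $$ (i, i) * \<rho> (st b) $$ (k, k))"
    unfolding Sm_def ..
  also have "\<dots> = (\<Sum>i<n0. \<Sum>b\<in>B. \<Sum>k<n0. \<rho> b $$ (i, i) * \<rho> (st b) $$ (k, k))"
    by (rule sum.cong[OF refl], rule sum.swap)
  also have "\<dots> = (\<Sum>b\<in>B. \<Sum>i<n0. \<Sum>k<n0. \<rho> b $$ (i, i) * \<rho> (st b) $$ (k, k))"
    by (rule sum.swap)
  also have "\<dots> = (\<Sum>b\<in>B. (\<Sum>i<n0. \<rho> b $$ (i, i)) * (\<Sum>k<n0. \<rho> (st b) $$ (k, k)))"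
    by (simp add: sum_product)
  finally show ?thesis .
qed

lemma final_c:
  shows "in_two_Gamma (\<nu> (c l0)) \<and>
     (\<exists>\<rho>. irreducible_rep sc n0 \<rho> \<and> iso_rep n0 r0 n0 \<rho> \<and> balanced_rep sc \<tau> st \<nu> (c l0) \<rho>)"
proof -
  obtain ws where ws: "length ws = n0"
    "\<forall>k<n0. ws!k \<in> carrier_vec n0 \<and> ws!k $ k = 1 \<and> (\<forall>i<n0. k < i \<longrightarrow> ws!k $ i = 0)"
    "\<forall>k<n0. \<forall>m<n0. m \<noteq> k \<longrightarrow> ff (ws!k) (ws!m) = 0"
    using gram_schmidt[of n0 ff] ff_sym ff_rowexp ff_zero by blast
  have wsc: "ws!k \<in> carrier_vec n0" if "k < n0" for k using ws that by blast
  have wsnz: "ws!k \<noteq> 0\<^sub>v n0" if "k < n0" for k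
  proof
    assume "ws!k = 0\<^sub>v n0"
    then have "ws!k $ k = 0" using that by simp
    with ws that show False by simp
  qed
  have g0nz: "ff (ws!k) (ws!k) \<noteq> 0" if "k < n0" for k using ff_zero[OF wsc[OF that]] wsnz[OF that] by simp
  have ex_t: "\<exists>t. t \<noteq> 0 \<and> \<nu> (t^2 * ff (ws!k) (ws!k)) = 0" if k: "k < n0" for k
  proof -
    obtain h where h: "\<nu> (ff (ws!k) (ws!k)) = h + h" using ff_two[OF wsc[OF k] wsnz[OF k]] unfolding in_two_Gamma_def by blast
    obtain x where x: "x \<noteq> 0" "\<nu> x = - h" using val unfolding surjective_valuation_def by blast
    have "\<nu> (x^2 * ff (ws!k) (ws!k)) = \<nu> (x^2) + \<nu> (ff (ws!k) (ws!k))"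
      using v_mult[OF isv, of "x^2"] g0nz[OF k] x by simp
    also have "\<dots> = 0" using v_sq[OF isv x(1)] x h by (simp add: algebra_simps)
    finally show ?thesis using x by blast
  qed
  define t where "t k = (SOME t. t \<noteq> 0 \<and> \<nu> (t^2 * ff (ws!k) (ws!k)) = 0)" for k
  have tP: "t k \<noteq> 0 \<and> \<nu> (t k ^2 * ff (ws!k) (ws!k)) = 0" if "k < n0" for k
    unfolding t_def by (rule someI_ex[OF ex_t[OF that]])
  define P where "P = mat n0 n0 (\<lambda>(i, k). t k * ws!k $ i)"
  have Pc: "P \<in> carrier_mat n0 n0" unfolding P_def by simp
  have ut: "upper_triangular P" unfolding upper_triangular_def P_def using ws by auto
  have "det P = prod_list (diag_mat P)" by (rule det_upper_triangular[OF ut Pc])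
  moreover have "0 \<notin> set (diag_mat P)"
    unfolding diag_mat_def P_def using ws tP by auto
  ultimately have detP: "det P \<noteq> 0" by (simp add: prod_list_zero_iff)
  from det_non_zero_imp_unit[OF Pc detP, of "()"]
  obtain Q where Q: "Q \<in> carrier_mat n0 n0" "P * Q = 1\<^sub>m n0" "Q * P = 1\<^sub>m n0"
    unfolding Units_def ring_mat_def by auto
  define \<rho>' where "\<rho>' h = Q * r0 h * P" for h
  have conj: "irreducible_rep sc n0 \<rho>' \<and> iso_rep n0 r0 n0 \<rho>'"
    unfolding \<rho>'_def using conj_rep[OF i0 Pc Q] by blast
  have rep': "matrix_rep sc n0 \<rho>'" using conj unfolding irreducible_rep_def by blast
  have c': "\<rho>' h \<in> carrier_mat n0 n0" for h using rep_carrier[OF rep'] .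
  define pc where "pc k = P *\<^sub>v unit_vec n0 k" for k
  have pc_eq: "pc k = t k \<cdot>\<^sub>v ws!k" if k: "k < n0" for k
    by (rule eq_vecI) (use Pc k wsc[OF k] in \<open>auto simp: pc_def P_def\<close>)
  have pcc: "pc k \<in> carrier_vec n0" if "k < n0" for k using pc_eq[OF that] wsc[OF that] by simp
  have pc_ent: "pc k $ p = P $$ (p, k)" if "k < n0" "p < n0" for k p
    using that Pc unfolding pc_def by simp
  define dd where "dd k = ff (pc k) (pc k)" for k
  have pc_sc: "ff (pc k) (pc m) = t k * t m * ff (ws!k) (ws!m)" if "k < n0" "m < n0" for k m
  proof -
    have "ff (pc k) (pc m) = t k * ff (ws!k) (t m \<cdot>\<^sub>v ws!m)"
      unfolding pc_eq[OF that(1)] pc_eq[OF that(2)] using ff_smult wsc that by simp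
    also have "ff (ws!k) (t m \<cdot>\<^sub>v ws!m) = t m * ff (ws!k) (ws!m)"
      using ff_sym[of "ws!k"] ff_smult wsc that by (metis ff_sym)
    finally show ?thesis by simp
  qed
  have orthP: "ff (pc k) (pc m) = 0" if "k < n0" "m < n0" "k \<noteq> m" for k m
    using pc_sc[OF that(1,2)] ws(3) that by simp
  have ddv: "dd k \<noteq> 0 \<and> \<nu> (dd k) = 0" if k: "k < n0" for k
  proof -
    have "dd k = t k ^2 * ff (ws!k) (ws!k)" unfolding dd_def using pc_sc[OF k k] by (simp add: power2_eq_square)
    then show ?thesis using tP[OF k] g0nz[OF k] by simp
  qed
  have Pz: "ff (P *\<^sub>v z) (pc m) = z $ m * dd m" if z: "z \<in> carrier_vec n0" and m: "m < n0" for z m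
  proof -
    define F where "F p = ff (unit_vec n0 p) (pc m)" for p
    have "ff (P *\<^sub>v z) (pc m) = (\<Sum>p<n0. (P *\<^sub>v z) $ p * F p)"
      unfolding F_def by (rule ff_rowexp) (use Pc z pcc m in auto)
    also have "\<dots> = (\<Sum>p<n0. \<Sum>r<n0. z $ r * (P $$ (p, r) * F p))"
      by (rule sum.cong[OF refl]) (use Pc z in \<open>auto simp: scalar_prod_def sum_distrib_right sum_distrib_left ac_simps atLeast0LessThan\<close>)
    also have "\<dots> = (\<Sum>r<n0. z $ r * (\<Sum>p<n0. P $$ (p, r) * F p))"
      by (subst sum.swap) (simp add: sum_distrib_left)
    also have "\<dots> = (\<Sum>r<n0. z $ r * ff (pc r) (pc m))"
    proof (rule sum.cong[OF refl])
      fix r assume "r \<in> {..<n0}"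
      then have r: "r < n0" by simp
      have "ff (pc r) (pc m) = (\<Sum>p<n0. pc r $ p * F p)"
        unfolding F_def by (rule ff_rowexp[OF pcc[OF r] pcc[OF m]])
      also have "\<dots> = (\<Sum>p<n0. P $$ (p, r) * F p)" by (rule sum.cong[OF refl]) (simp add: pc_ent r)
      finally show "z $ r * (\<Sum>p<n0. P $$ (p, r) * F p) = z $ r * ff (pc r) (pc m)" by simp
    qed
    also have "\<dots> = (\<Sum>r<n0. if r = m then z $ m * dd m else 0)"
      by (rule sum.cong[OF refl]) (use orthP m in \<open>auto simp: dd_def\<close>)
    also have "\<dots> = z $ m * dd m" using m by simp
    finally show ?thesis .
  qed
  have conjcol: "r0 h *\<^sub>v pc j = P *\<^sub>v (\<rho>' h *\<^sub>v unit_vec n0 j)" if j: "j < n0" for h j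
  proof -
    have uj: "unit_vec n0 j \<in> carrier_vec n0" by simp
    have "P * (Q * r0 h * P) = r0 h * P"
    proof -
      have "P * (Q * r0 h * P) = P * (Q * (r0 h * P))" using assoc_mult_mat[OF Q(1) r0_carrier Pc] by simp
      also have "\<dots> = (P * Q) * (r0 h * P)" using assoc_mult_mat[OF Pc Q(1) mult_carrier_mat[OF r0_carrier Pc]] by simp
      also have "\<dots> = r0 h * P" using Q(2) mult_carrier_mat[OF r0_carrier Pc] by simp
      finally show ?thesis .
    qed
    then have "P *\<^sub>v (\<rho>' h *\<^sub>v unit_vec n0 j) = (r0 h * P) *\<^sub>v unit_vec n0 j"
      unfolding \<rho>'_def using assoc_mult_mat_vec[OF Pc c'[of h, unfolded \<rho>'_def] uj] by simp
    also have "\<dots> = r0 h *\<^sub>v pc j" unfolding pc_def using assoc_mult_mat_vec[OF r0_carrier Pc uj] .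
    finally show ?thesis by simp
  qed
  have colent: "(\<rho>' h *\<^sub>v unit_vec n0 j) $ i = \<rho>' h $$ (i, j)" if "i < n0" "j < n0" for h i j
    using that c'[of h] by simp
  have key: "\<rho>' (st h) $$ (i, j) * dd i = dd j * \<rho>' h $$ (j, i)" if i: "i < n0" and j: "j < n0" for h i j
  proof -
    have u1: "\<rho>' (st h) *\<^sub>v unit_vec n0 j \<in> carrier_vec n0" by (rule mult_mat_vec_carrier[OF c']) simp
    have u2: "\<rho>' h *\<^sub>v unit_vec n0 i \<in> carrier_vec n0" by (rule mult_mat_vec_carrier[OF c']) simp
    have "\<rho>' (st h) $$ (i, j) * dd i = ff (r0 (st h) *\<^sub>v pc j) (pc i)"
      unfolding conjcol[OF j] Pz[OF u1 i] colent[OF i j] ..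
    also have "\<dots> = ff (pc j) (r0 h *\<^sub>v pc i)" by (rule ff_inv[OF pcc[OF j] pcc[OF i]])
    also have "\<dots> = ff (r0 h *\<^sub>v pc i) (pc j)" by (rule ff_sym)
    also have "\<dots> = \<rho>' h $$ (j, i) * dd j"
      unfolding conjcol[OF i] Pz[OF u2 j] colent[OF j i] ..
    finally show ?thesis by simp
  qed
  have SmP: "Sm B \<rho>' \<rho>' i j k l = (if i = l \<and> j = k then c l0 else 0)"
    if B: "star_sym_basis sc \<tau> st B" and idx: "i < n0" "j < n0" "k < n0" "l < n0" for B i j k l
  proof -
    obtain \<sigma> where \<sigma>: "\<forall>i j k l. i < n0 \<longrightarrow> j < n0 \<longrightarrow> k < n0 \<longrightarrow> l < n0 \<longrightarrow>
           Sm B \<rho>' \<rho>' i j k l = (if i = l \<and> j = k then \<sigma> else 0)"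
      using Orth_same[OF B spl] conj by blast
    have T1: "(\<Sum>i<n0. \<Sum>k<n0. Sm B \<rho>' \<rho>' i i k k) = of_nat n0 * \<sigma>"
    proof -
      have "(\<Sum>i<n0. \<Sum>k<n0. Sm B \<rho>' \<rho>' i i k k) = (\<Sum>i<n0. \<Sum>k<n0. if k = i then \<sigma> else 0)"
        by (intro sum.cong refl) (use \<sigma> in auto)
      then show ?thesis by simp
    qed
    have T2: "(\<Sum>i<n0. \<Sum>k<n0. Sm B r0 r0 i i k k) = of_nat n0 * c l0"
    proof -
      have "(\<Sum>i<n0. \<Sum>k<n0. Sm B r0 r0 i i k k) = (\<Sum>i<n0. \<Sum>k<n0. if k = i then c l0 else 0)"
        by (intro sum.cong refl) (use Orth_rhos[OF B lam] in \<open>auto simp: r0_def n0_def\<close>)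
      then show ?thesis by simp
    qed
    have tr: "(\<Sum>i<n0. \<rho>' h $$ (i, i)) = (\<Sum>i<n0. r0 h $$ (i, i))" for h
      unfolding \<rho>'_def by (rule trace_conj[OF r0_carrier Pc Q(1,2)])
    have "of_nat n0 * \<sigma> = of_nat n0 * c l0"
      unfolding T1[symmetric] T2[symmetric] Sm_trace[OF c'] Sm_trace[OF r0_carrier] tr ..
    then have "\<sigma> = c l0" using ofnat_nz[OF n0pos] by simp
    then show ?thesis using \<sigma> idx by simp
  qed
  have rel: "c l0 * dd j = dd i * (\<Sum>b\<in>B. (\<rho>' b $$ (i, j))^2)"
    if B: "star_sym_basis sc \<tau> st B" and i: "i < n0" and j: "j < n0" for B i j
  proof -
    have "c l0 = (\<Sum>b\<in>B. \<rho>' b $$ (i, j) * \<rho>' (st b) $$ (j, i))"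
      using SmP[OF B i j j i] unfolding Sm_def by simp
    then have "c l0 * dd j = (\<Sum>b\<in>B. \<rho>' b $$ (i, j) * (\<rho>' (st b) $$ (j, i) * dd j))"
      by (simp add: sum_distrib_right mult.assoc)
    also have "\<dots> = (\<Sum>b\<in>B. \<rho>' b $$ (i, j) * (dd i * \<rho>' b $$ (i, j)))"
      using key[OF j i] by simp
    also have "\<dots> = dd i * (\<Sum>b\<in>B. (\<rho>' b $$ (i, j))^2)"
      by (simp add: sum_distrib_left power2_eq_square ac_simps)
    finally show ?thesis .
  qed
  have cnz: "c l0 \<noteq> 0" using schur_nz lam by blast
  have two: "in_two_Gamma (\<nu> (c l0))"
  proof -
    have "c l0 * dd 0 = dd 0 * (\<Sum>b\<in>B0. (\<rho>' b $$ (0, 0))^2)" using rel[OF B0 n0pos n0pos] .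
    then have e: "c l0 = (\<Sum>b\<in>B0. (\<rho>' b $$ (0, 0))^2)" using ddv[OF n0pos] by simp
    obtain xs where "(\<Sum>b\<in>B0. (\<rho>' b $$ (0, 0))^2) = sum_list (map (\<lambda>x. x^2) xs)"
      using sos_set[OF finB[OF B0], of "\<lambda>b. \<rho>' b $$ (0, 0)"] by blast
    then show ?thesis using K5[OF isv freal] e cnz by simp
  qed
  then obtain g where g: "\<nu> (c l0) = g + g" unfolding in_two_Gamma_def by blast
  have bal: "balanced_rep sc \<tau> st \<nu> (c l0) \<rho>'"
    unfolding balanced_rep_def
  proof (intro exI conjI allI impI ballI)
    show "\<nu> (c l0) = g + g" by (rule g)
  next
    fix B b assume B: "star_sym_basis sc \<tau> st B" and b: "b \<in> B"
    show "mat_val_ge \<nu> (\<rho>' b) g"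
      unfolding mat_val_ge_def
    proof (intro allI impI)
      fix i j assume i: "i < dim_row (\<rho>' b)" and j: "j < dim_col (\<rho>' b)" and x: "\<rho>' b $$ (i, j) \<noteq> 0"
      have i': "i < n0" and j': "j < n0" using i j c'[of b] by auto
      obtain xs where xs: "(\<Sum>b\<in>B. (\<rho>' b $$ (i, j))^2) = sum_list (map (\<lambda>x. x^2) xs)"
        "set xs = (\<lambda>b. \<rho>' b $$ (i, j)) ` B"
        using sos_set[OF finB[OF B], of "\<lambda>b. \<rho>' b $$ (i, j)"] by blast
      have xin: "\<rho>' b $$ (i, j) \<in> set xs" using xs(2) b by blast
      have snz: "sum_list (map (\<lambda>x. x^2) xs) \<noteq> 0"
        using K3[OF isv freal, of xs] xin x by blast
      have le: "\<nu> (sum_list (map (\<lambda>x. x^2) xs)) \<le> \<nu> (\<rho>' b $$ (i, j)) + \<nu> (\<rho>' b $$ (i, j))"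
        by (rule K4[OF isv freal xin x])
      have eq: "c l0 * dd j = dd i * sum_list (map (\<lambda>x. x^2) xs)" using rel[OF B i' j'] xs(1) by simp
      have "\<nu> (c l0 * dd j) = \<nu> (c l0)" using v_mult[OF isv cnz] ddv[OF j'] by simp
      moreover have "\<nu> (dd i * sum_list (map (\<lambda>x. x^2) xs)) = \<nu> (sum_list (map (\<lambda>x. x^2) xs))"
        using v_mult[OF isv, of "dd i"] ddv[OF i'] snz by simp
      ultimately have "\<nu> (c l0) = \<nu> (sum_list (map (\<lambda>x. x^2) xs))" using eq by simp
      with le g have "g + g \<le> \<nu> (\<rho>' b $$ (i, j)) + \<nu> (\<rho>' b $$ (i, j))" by simp
      then show "g \<le> \<nu> (\<rho>' b $$ (i, j))" by (rule grp_double_le)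
    qed
  qed
  show ?thesis using two conj bal by blast
qed

end

theorem mainTheorem5:
  fixes \<nu> :: "'k::field \<Rightarrow> 'g::linordered_ab_group_add"
    and sc :: "'k \<Rightarrow> 'h::ring_1 \<Rightarrow> 'h"
    and \<tau> :: "'h \<Rightarrow> 'k"
    and st :: "'h \<Rightarrow> 'h"
    and \<Lambda> :: "'l set"
    and d :: "'l \<Rightarrow> nat"
    and \<rho>s :: "'l \<Rightarrow> 'h \<Rightarrow> 'k mat"
    and c :: "'l \<Rightarrow> 'k"
    and l0 :: 'l
  assumes val: "surjective_valuation \<nu>"
    and freal: "residue_formally_real \<nu>"
    and alg: "fd_algebra sc"
    and ss: "semisimple_alg sc"
    and spl: "split_alg sc"
    and sym: "symmetric_trace_form sc \<tau>"
    and star: "lin_inv_antiaut sc st"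
    and ex_basis: "\<exists>B. star_sym_basis sc \<tau> st B"
    and fin: "finite \<Lambda>"
    and irr: "\<forall>\<mu>\<in>\<Lambda>. irreducible_rep sc (d \<mu>) (\<rho>s \<mu>)"
    and noniso: "\<forall>\<mu>\<in>\<Lambda>. \<forall>\<mu>'\<in>\<Lambda>. iso_rep (d \<mu>) (\<rho>s \<mu>) (d \<mu>') (\<rho>s \<mu>') \<longrightarrow> \<mu> = \<mu>'"
    and complete: "\<forall>n \<rho>. irreducible_rep sc n \<rho> \<longrightarrow> (\<exists>\<mu>\<in>\<Lambda>. iso_rep (d \<mu>) (\<rho>s \<mu>) n \<rho>)"
    and schur_nz: "\<forall>\<mu>\<in>\<Lambda>. c \<mu> \<noteq> 0"
    and schur: "\<forall>h. \<tau> h = (\<Sum>\<mu>\<in>\<Lambda>. inverse (c \<mu>) * mat_trace (\<rho>s \<mu> h))"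
    and lam: "l0 \<in> \<Lambda>"
  shows "(\<exists>f :: 'k vec \<Rightarrow> 'k vec \<Rightarrow> 'k.
            (\<forall>u\<in>carrier_vec (d l0). \<forall>v\<in>carrier_vec (d l0). f u v = f v u) \<and>
            (\<forall>u\<in>carrier_vec (d l0). \<forall>v\<in>carrier_vec (d l0). \<forall>w\<in>carrier_vec (d l0).
                f (u + v) w = f u w + f v w) \<and>
            (\<forall>a. \<forall>u\<in>carrier_vec (d l0). \<forall>w\<in>carrier_vec (d l0). f (a \<cdot>\<^sub>v u) w = a * f u w) \<and>
            (\<forall>h. \<forall>v\<in>carrier_vec (d l0). \<forall>w\<in>carrier_vec (d l0).
                f (\<rho>s l0 (st h) *\<^sub>v v) w = f v (\<rho>s l0 h *\<^sub>v w)) \<and>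
            (\<forall>w\<in>carrier_vec (d l0). sum_of_squares (f w w) \<and> (f w w = 0 \<longleftrightarrow> w = 0\<^sub>v (d l0))) \<and>
            (\<forall>w\<in>carrier_vec (d l0). w \<noteq> 0\<^sub>v (d l0) \<longrightarrow> in_two_Gamma (\<nu> (f w w))))
       \<and> in_two_Gamma (\<nu> (c l0))
       \<and> (\<exists>\<rho>. irreducible_rep sc (d l0) \<rho> \<and> iso_rep (d l0) (\<rho>s l0) (d l0) \<rho> \<and>
              balanced_rep sc \<tau> st \<nu> (c l0) \<rho>)"
  proof -
  interpret m: mainctx sc \<tau> st \<nu> \<Lambda> d \<rho>s c l0
    using assms unfolding mainctx_def salg_def mainctx_axioms_def by blast
  have fc: "in_two_Gamma (\<nu> (c l0)) \<and>
     (\<exists>\<rho>. irreducible_rep sc (d l0) \<rho> \<and> iso_rep (d l0) (\<rho>s l0) (d l0) \<rho> \<and> balanced_rep sc \<tau> st \<nu> (c l0) \<rho>)"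
    using m.final_c unfolding m.n0_def m.r0_def .
  have fa: "(\<forall>u\<in>carrier_vec (d l0). \<forall>v\<in>carrier_vec (d l0). m.ff u v = m.ff v u) \<and>
            (\<forall>u\<in>carrier_vec (d l0). \<forall>v\<in>carrier_vec (d l0). \<forall>w\<in>carrier_vec (d l0).
                m.ff (u + v) w = m.ff u w + m.ff v w) \<and>
            (\<forall>a. \<forall>u\<in>carrier_vec (d l0). \<forall>w\<in>carrier_vec (d l0). m.ff (a \<cdot>\<^sub>v u) w = a * m.ff u w) \<and>
            (\<forall>h. \<forall>v\<in>carrier_vec (d l0). \<forall>w\<in>carrier_vec (d l0).
                m.ff (\<rho>s l0 (st h) *\<^sub>v v) w = m.ff v (\<rho>s l0 h *\<^sub>v w)) \<and>
            (\<forall>w\<in>carrier_vec (d l0). sum_of_squares (m.ff w w) \<and> (m.ff w w = 0 \<longleftrightarrow> w = 0\<^sub>v (d l0))) \<and>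
            (\<forall>w\<in>carrier_vec (d l0). w \<noteq> 0\<^sub>v (d l0) \<longrightarrow> in_two_Gamma (\<nu> (m.ff w w)))"
    using m.ff_sym m.ff_add m.ff_smult m.ff_inv m.ff_sos' m.ff_zero m.ff_two
    unfolding m.n0_def m.r0_def by blast
  show ?thesis using fa fc by blast
qed

end
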